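(* Let $\mathcal W$ be the even part of $W(m,n;\underline t)$ over a field of characteristic $p>3$, $m,n\ge3$. If $q>1$ is an integer that is not a power of $p$, then $\mathrm{Der}_{-q}(\mathcal W)=0$.
   Context: $\mathbb F$ is a field of characteristic $p>3$; $m,n\ge 3$; $\underline t=(t_1,\dots,t_m)$ positive integers, $\pi_i=p^{t_i}-1$. $Y_0=\{1,\dots,m\}$, $Y_1=\{m+1,\dots,m+n\}$, $Y=Y_0\cup Y_1$, $\tau(r)=\bar0$ on $Y_0$, $\bar1$ on $Y_1$. $\mathfrak A=\mathfrak A(m,n;\underline t)$ is the supercommutative superalgebra with basis $x^{(\alpha)}x^u$ ($\alpha\in\mathbb N_0^m$, $\alpha_i\le\pi_i$; $u$ an increasing sequence in $Y_1$, $x^u$ the product of odd generators $x_k$, $k\in u$), divided-power multiplication (zero if some index exceeds $\pi_i$), anticommuting $x_k$, parity $|u|\bmod 2$. $D_i$ ($i\in Y_0$) sends $x^{(\alpha)}x^u\mapsto x^{(\alpha-\varepsilon_i)}x^u$, $D_k$ ($k\in Y_1$) is the odd partial derivative $\partial/\partial x_k$. $W=\{\sum_{r\in Y}f_rD_r:f_r\in\mathfrak A\}$ with bracket $[fD_r,gD_s]=fD_r(g)D_s-(-1)^{\mathrm p(fD_r)\mathrm p(gD_s)}gD_s(f)D_r$; $x^{(\alpha)}x^uD_r$ has parity $|u|+\tau(r)$ and $\mathbb Z$-degree $|\alpha|+|u|-1$. $\mathcal W=W_{\bar0}=\bigoplus_{i\ge-1}\mathcal W_i$ with the induced $\mathbb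 Z$-grading. $\mathrm{Der}_{-q}(\mathcal W)$ is the space of derivations $D$ of $\mathcal W$ with $D(\mathcal W_i)\subset\mathcal W_{i-q}$ for all $i$. *)

theory Defs
  imports Main "HOL-Computational_Algebra.Primes"
begin

text \<open>Monomials x^(alpha) x^u: alpha is a multi-index (zero outside Y0), u a finite
 subset of Y1 (= an increasing sequence in Y1).\<close>
type_synonym mono = "(nat \<Rightarrow> nat) \<times> nat set"

definition Y0 :: "nat \<Rightarrow> nat set" where "Y0 m = {1..m}"
definition Y1 :: "nat \<Rightarrow> nat \<Rightarrow> nat set" where "Y1 m n = {m+1..m+n}"
definition Y :: "nat \<Rightarrow> nat \<Rightarrow> nat set" where "Y m n = Y0 m \<union> Y1 m n"

definition tau :: "nat \<Rightarrow> nat \<Rightarrow> nat" where "tau m r = (if r \<in> Y0 m then 0 else 1)"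

text \<open>The basis of the divided power superalgebra A(m,n;t), pi_i = p^(t_i) - 1.\<close>
definition basisA :: "nat \<Rightarrow> nat \<Rightarrow> nat \<Rightarrow> (nat \<Rightarrow> nat) \<Rightarrow> mono set" where
  "basisA p m n t = {(\<alpha>, u). (\<forall>i. i \<notin> Y0 m \<longrightarrow> \<alpha> i = 0) \<and>
       (\<forall>i\<in>Y0 m. \<alpha> i \<le> p ^ t i - 1) \<and> u \<subseteq> Y1 m n}"

definition carrierA :: "nat \<Rightarrow> nat \<Rightarrow> nat \<Rightarrow> (nat \<Rightarrow> nat) \<Rightarrow> (mono \<Rightarrow> 'a::field) set" where
  "carrierA p m n t = {f. \<forall>a. f a \<noteq> 0 \<longrightarrow> a \<in> basisA p m n t}"

text \<open>Number of inversions: x^u x^v = (-1)^(inv u v) x^(u \<union> v) for disjoint u, v.\<close>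
definition inv_count :: "nat set \<Rightarrow> nat set \<Rightarrow> nat" where
  "inv_count u v = card {(i, j). i \<in> u \<and> j \<in> v \<and> j < i}"

text \<open>Multiplication in A: divided powers (zero when some index exceeds pi_i),
 anticommuting odd generators.\<close>
definition multA :: "nat \<Rightarrow> nat \<Rightarrow> nat \<Rightarrow> (nat \<Rightarrow> nat) \<Rightarrow>
    (mono \<Rightarrow> 'a::field) \<Rightarrow> (mono \<Rightarrow> 'a) \<Rightarrow> mono \<Rightarrow> 'a" where
  "multA p m n t f g = (\<lambda>(\<gamma>, w). if (\<gamma>, w) \<in> basisA p m n t then
     (\<Sum>(\<alpha>, u)\<in>basisA p m n t. \<Sum>(\<beta>, v)\<in>basisA p m n t.
        if (\<forall>i. \<gamma> i = \<alpha> i + \<beta> i) \<and> u \<inter> v = {} \<and> w = u \<union> v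
        then f (\<alpha>, u) * g (\<beta>, v) * of_nat (\<Prod>i\<in>Y0 m. (\<alpha> i + \<beta> i) choose \<alpha> i)
             * (- 1) ^ inv_count u v
        else 0)
     else 0)"

text \<open>The partial derivatives D_r on A (D_i for i in Y0: lowers alpha_i;
 D_k for k in Y1: the odd left derivative d/dx_k).\<close>
definition derA :: "nat \<Rightarrow> nat \<Rightarrow> nat \<Rightarrow> (nat \<Rightarrow> nat) \<Rightarrow> nat \<Rightarrow>
    (mono \<Rightarrow> 'a::field) \<Rightarrow> mono \<Rightarrow> 'a" where
  "derA p m n t r f = (\<lambda>(\<gamma>, w). if (\<gamma>, w) \<in> basisA p m n t then
     (if r \<in> Y0 m then f (\<gamma>(r := \<gamma> r + 1), w)
      else if r \<in> Y1 m n \<and> r \<notin> w then (- 1) ^ card {j \<in> w. j < r} * f (\<gamma>, insert r w)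
      else 0)
     else 0)"

text \<open>Elements of W are families (f_r)_{r in Y} standing for sum_r f_r D_r.
 The even part: coefficient of x^(alpha) x^u D_r nonzero only if |u| + tau(r) is even.\<close>
type_synonym 'a wel = "nat \<Rightarrow> mono \<Rightarrow> 'a"

definition Wev :: "nat \<Rightarrow> nat \<Rightarrow> nat \<Rightarrow> (nat \<Rightarrow> nat) \<Rightarrow> ('a::field) wel set" where
  "Wev p m n t = {X. (\<forall>r a. X r a \<noteq> 0 \<longrightarrow>
       r \<in> Y m n \<and> a \<in> basisA p m n t \<and> even (card (snd a) + tau m r))}"

text \<open>Action of sum_r f_r D_r on A, and the bracket on the even part
 (all summands f_r D_r are even there, so no signs occur):
 [X, Y] = sum_s (X(g_s) - Y(f_s)) D_s.\<close>
definition actW :: "nat \<Rightarrow> nat \<Rightarrow> nat \<Rightarrow> (nat \<Rightarrow> nat) \<Rightarrow>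
    ('a::field) wel \<Rightarrow> (mono \<Rightarrow> 'a) \<Rightarrow> mono \<Rightarrow> 'a" where
  "actW p m n t X g = (\<lambda>a. \<Sum>r\<in>Y m n. multA p m n t (X r) (derA p m n t r g) a)"

definition brW :: "nat \<Rightarrow> nat \<Rightarrow> nat \<Rightarrow> (nat \<Rightarrow> nat) \<Rightarrow>
    ('a::field) wel \<Rightarrow> 'a wel \<Rightarrow> 'a wel" where
  "brW p m n t X Z = (\<lambda>s a. actW p m n t X (Z s) a - actW p m n t Z (X s) a)"

text \<open>Z-degree of x^(alpha) x^u D_r is |alpha| + |u| - 1; homogeneous component W_i
 (which is 0 for i < -1).\<close>
definition Wdeg :: "nat \<Rightarrow> nat \<Rightarrow> nat \<Rightarrow> (nat \<Rightarrow> nat) \<Rightarrow> int \<Rightarrow> ('a::field) wel set" where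
  "Wdeg p m n t i = {X \<in> Wev p m n t. \<forall>r a. X r a \<noteq> 0 \<longrightarrow>
       int (\<Sum>j\<in>Y0 m. fst a j) + int (card (snd a)) - 1 = i}"

definition is_derivation :: "nat \<Rightarrow> nat \<Rightarrow> nat \<Rightarrow> (nat \<Rightarrow> nat) \<Rightarrow>
    (('a::field) wel \<Rightarrow> 'a wel) \<Rightarrow> bool" where
  "is_derivation p m n t D \<longleftrightarrow>
     (\<forall>X\<in>Wev p m n t. D X \<in> Wev p m n t) \<and>
     (\<forall>X\<in>Wev p m n t. \<forall>Z\<in>Wev p m n t. D (\<lambda>r a. X r a + Z r a) = (\<lambda>r a. D X r a + D Z r a)) \<and>
     (\<forall>c. \<forall>X\<in>Wev p m n t. D (\<lambda>r a. c * X r a) = (\<lambda>r a. c * D X r a)) \<and>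
     (\<forall>X\<in>Wev p m n t. \<forall>Z\<in>Wev p m n t.
        D (brW p m n t X Z) = (\<lambda>r a. brW p m n t (D X) Z r a + brW p m n t X (D Z) r a))"

definition Der_deg :: "nat \<Rightarrow> nat \<Rightarrow> nat \<Rightarrow> (nat \<Rightarrow> nat) \<Rightarrow> int \<Rightarrow>
    (('a::field) wel \<Rightarrow> 'a wel) set" where
  "Der_deg p m n t k = {D. is_derivation p m n t D \<and>
     (\<forall>i. \<forall>X\<in>Wdeg p m n t i. D X \<in> Wdeg p m n t (i + k))}"

end

theory Submission
  imports Defs "HOL-Library.FuncSet" "HOL-Computational_Algebra.Polynomial"
begin

definition mon :: "mono \<Rightarrow> mono \<Rightarrow> 'a::field" where "mon a = (\<lambda>b. if b = a then 1 else 0)"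

lemma finite_basisA: "finite (basisA p m n t)"
proof -
  have "basisA p m n t \<subseteq> ((\<lambda>f. \<lambda>i. if i \<in> Y0 m then f i else 0) ` PiE (Y0 m) (\<lambda>i. {..p^t i - 1})) \<times> Pow (Y1 m n)"
  proof
    fix x assume "x \<in> basisA p m n t"
    then obtain \<alpha> u where x: "x = (\<alpha>, u)" and h: "(\<forall>i. i \<notin> Y0 m \<longrightarrow> \<alpha> i = 0)"
      "(\<forall>i\<in>Y0 m. \<alpha> i \<le> p ^ t i - 1)" "u \<subseteq> Y1 m n" unfolding basisA_def by auto
    have "\<alpha> = (\<lambda>i. if i \<in> Y0 m then restrict \<alpha> (Y0 m) i else 0)" using h by (auto intro!: ext)
    moreover have "restrict \<alpha> (Y0 m) \<in> PiE (Y0 m) (\<lambda>i. {..p^t i - 1})" using h by (auto intro!: ext)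
    ultimately show "x \<in> ((\<lambda>f. \<lambda>i. if i \<in> Y0 m then f i else 0) ` PiE (Y0 m) (\<lambda>i. {..p^t i - 1})) \<times> Pow (Y1 m n)"
      using x h by blast
  qed
  moreover have "finite (PiE (Y0 m) (\<lambda>i. {..p^t i - 1}))" by (rule finite_PiE) (auto simp: Y0_def)
  moreover have "finite (Pow (Y1 m n))" by (simp add: Y1_def)
  ultimately show ?thesis by (meson finite_SigmaI finite_imageI finite_subset)
qed

lemma sum_single:
  assumes "finite S" "x0 \<in> S" "\<And>x. x \<in> S \<Longrightarrow> x \<noteq> x0 \<Longrightarrow> f x = 0"
  shows "sum f S = f x0"
  using assms by (metis (mono_tags, lifting) sum.remove sum.neutral add.right_neutral DiffE insertCI)

lemma basisA_sub:
  assumes "(\<gamma>, w) \<in> basisA p m n t" "\<And>i. \<beta> i \<le> \<gamma> i" "v \<subseteq> w"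
  shows "(\<beta>, v) \<in> basisA p m n t"
proof -
  have "(\<forall>i. i \<notin> Y0 m \<longrightarrow> \<gamma> i = 0)" "(\<forall>i\<in>Y0 m. \<gamma> i \<le> p ^ t i - 1)" "w \<subseteq> Y1 m n"
    using assms(1) unfolding basisA_def by auto
  then show ?thesis using assms(2,3) unfolding basisA_def by (auto intro: le_trans) (metis le_zero_eq, meson le_trans)
qed

lemma multA_mon_left:
  assumes a0: "(a0,u0) \<in> basisA p m n t" and g: "g \<in> carrierA p m n t"
  shows "multA p m n t (mon (a0,u0)) g (\<gamma>,w) =
    (if (\<gamma>,w) \<in> basisA p m n t \<and> (\<forall>i. a0 i \<le> \<gamma> i) \<and> u0 \<subseteq> w
     then of_nat (\<Prod>i\<in>Y0 m. \<gamma> i choose a0 i) * (-1)^inv_count u0 (w - u0) * g (\<lambda>i. \<gamma> i - a0 i, w - u0)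
     else 0)"
proof (cases "(\<gamma>,w) \<in> basisA p m n t")
  case False
  then show ?thesis unfolding multA_def by simp
next
  case True
  let ?B = "basisA p m n t"
  let ?C = "\<lambda>\<alpha> u \<beta> v. (\<forall>i. \<gamma> i = \<alpha> i + \<beta> i) \<and> u \<inter> v = {} \<and> w = u \<union> v"
  let ?T = "\<lambda>\<alpha> u \<beta> v. if ?C \<alpha> u \<beta> v
        then mon (a0,u0) (\<alpha>, u) * g (\<beta>, v) * of_nat (\<Prod>i\<in>Y0 m. (\<alpha> i + \<beta> i) choose \<alpha> i)
             * (- 1) ^ inv_count u v else 0"
  have eq1: "multA p m n t (mon (a0,u0)) g (\<gamma>,w) = (\<Sum>(\<alpha>, u)\<in>?B. \<Sum>(\<beta>, v)\<in>?B. ?T \<alpha> u \<beta> v)"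
    using True unfolding multA_def by simp
  also have "\<dots> = (case (a0,u0) of (\<alpha>, u) \<Rightarrow> \<Sum>(\<beta>, v)\<in>?B. ?T \<alpha> u \<beta> v)"
  proof (rule sum_single[OF finite_basisA a0])
    fix x assume "x \<in> ?B" "x \<noteq> (a0, u0)"
    then obtain \<alpha> u where x: "x = (\<alpha>, u)" and ne: "(\<alpha>, u) \<noteq> (a0, u0)" by (cases x) auto
    have "mon (a0,u0) (\<alpha>, u) = (0::'a)" using ne by (simp add: mon_def)
    then have "?T \<alpha> u \<beta> v = 0" for \<beta> v by simp
    then show "(case x of (\<alpha>, u) \<Rightarrow> \<Sum>(\<beta>, v)\<in>?B. ?T \<alpha> u \<beta> v) = 0"
      using x by (auto intro!: sum.neutral)
  qed
  also have "\<dots> = (\<Sum>(\<beta>, v)\<in>?B. ?T a0 u0 \<beta> v)" by simp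
  also have "\<dots> = (if (\<forall>i. a0 i \<le> \<gamma> i) \<and> u0 \<subseteq> w
     then of_nat (\<Prod>i\<in>Y0 m. \<gamma> i choose a0 i) * (-1)^inv_count u0 (w - u0) * g (\<lambda>i. \<gamma> i - a0 i, w - u0)
     else 0)"
  proof (cases "(\<forall>i. a0 i \<le> \<gamma> i) \<and> u0 \<subseteq> w")
    case c: True
    let ?b0 = "(\<lambda>i. \<gamma> i - a0 i, w - u0)"
    have b0: "?b0 \<in> ?B" using basisA_sub[OF True] by auto
    have "(\<Sum>(\<beta>, v)\<in>?B. ?T a0 u0 \<beta> v) = (case ?b0 of (\<beta>, v) \<Rightarrow> ?T a0 u0 \<beta> v)"
    proof (rule sum_single[OF finite_basisA b0])
      fix x assume "x \<in> ?B" "x \<noteq> ?b0"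
      then obtain \<beta> v where x: "x = (\<beta>, v)" and ne: "(\<beta>, v) \<noteq> ?b0" by (cases x) auto
      have "\<not> ?C a0 u0 \<beta> v"
      proof
        assume h: "?C a0 u0 \<beta> v"
        then have "\<beta> = (\<lambda>i. \<gamma> i - a0 i)" by (auto intro!: ext)
        moreover have "v = w - u0" using h by auto
        ultimately show False using ne by simp
      qed
      then show "(case x of (\<beta>, v) \<Rightarrow> ?T a0 u0 \<beta> v) = 0" using x by (simp only: case_prod_conv if_False)
    qed
    also have "\<dots> = of_nat (\<Prod>i\<in>Y0 m. \<gamma> i choose a0 i) * (-1)^inv_count u0 (w - u0) * g (\<lambda>i. \<gamma> i - a0 i, w - u0)"
      using c by (auto simp: mon_def)
    finally show ?thesis using c by simp
  next
    case c: False
    have "?T a0 u0 \<beta> v = 0" for \<beta> v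
    proof -
      have "\<not> ?C a0 u0 \<beta> v" using c by auto
      then show ?thesis by (rule if_not_P)
    qed
    then have "(\<Sum>(\<beta>, v)\<in>?B. ?T a0 u0 \<beta> v) = 0" by (intro sum.neutral) auto
    then show ?thesis using c by (simp only: if_not_P if_False)
  qed
  finally show ?thesis using True by simp
qed

definition Mw :: "nat \<Rightarrow> mono \<Rightarrow> 'a::field wel" where
  "Mw r a = (\<lambda>s. if s = r then mon a else (\<lambda>_. 0))"

lemma zero_basisA: "((\<lambda>_. 0), {}) \<in> basisA p m n t"
  unfolding basisA_def by auto

lemma multA_zero_left: "multA p m n t (\<lambda>_. 0) g = (\<lambda>_. 0)"
  unfolding multA_def by (auto intro!: ext sum.neutral)

lemma multA_zero_right: "multA p m n t f (\<lambda>_. 0) = (\<lambda>_. 0)"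
  unfolding multA_def by (auto intro!: ext sum.neutral)

lemma derA_zero: "derA p m n t r (\<lambda>_. 0) = (\<lambda>_. 0)"
  unfolding derA_def by (auto intro!: ext)

lemma inv_count_empty: "inv_count u {} = 0" "inv_count {} u = 0"
  unfolding inv_count_def by auto

lemma multA_one_left:
  assumes g: "g \<in> carrierA p m n t"
  shows "multA p m n t (mon ((\<lambda>_. 0), {})) g = g"
proof
  fix x show "multA p m n t (mon ((\<lambda>_. 0), {})) g x = g x"
  proof (cases x)
    case (Pair \<gamma> w)
    show ?thesis using g unfolding Pair
      by (subst multA_mon_left[OF zero_basisA g]) (auto simp: inv_count_empty carrierA_def)
  qed
qed

lemma multA_one_right:
  assumes f: "f \<in> carrierA p m n t"
  shows "multA p m n t f (mon ((\<lambda>_. 0), {})) = f"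
proof
  fix x show "multA p m n t f (mon ((\<lambda>_. 0), {})) x = f x"
  proof (cases x)
    case (Pair \<gamma> w)
    let ?B = "basisA p m n t"
    let ?C = "\<lambda>\<alpha> u \<beta> v. (\<forall>i. \<gamma> i = \<alpha> i + \<beta> i) \<and> u \<inter> v = {} \<and> w = u \<union> v"
    let ?T = "\<lambda>\<alpha> u \<beta> v. if ?C \<alpha> u \<beta> v
        then f (\<alpha>, u) * mon ((\<lambda>_. 0), {}) (\<beta>, v) * of_nat (\<Prod>i\<in>Y0 m. (\<alpha> i + \<beta> i) choose \<alpha> i)
             * (- 1) ^ inv_count u v else (0::'a)"
    show ?thesis
    proof (cases "(\<gamma>, w) \<in> ?B")
      case False
      then show ?thesis using f unfolding Pair multA_def carrierA_def by auto
    next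
      case True
      have "multA p m n t f (mon ((\<lambda>_. 0), {})) (\<gamma>, w) = (\<Sum>(\<alpha>, u)\<in>?B. \<Sum>(\<beta>, v)\<in>?B. ?T \<alpha> u \<beta> v)"
        using True unfolding multA_def by simp
      also have "\<dots> = (\<Sum>(\<alpha>, u)\<in>?B. ?T \<alpha> u (\<lambda>_. 0) {})"
      proof (rule sum.cong[OF refl])
        fix x assume "x \<in> ?B"
        obtain \<alpha> u where x: "x = (\<alpha>, u)" by (cases x)
        have "(\<Sum>(\<beta>, v)\<in>?B. ?T \<alpha> u \<beta> v) = (case ((\<lambda>_. 0), {}) of (\<beta>, v) \<Rightarrow> ?T \<alpha> u \<beta> v)"
        proof (rule sum_single[OF finite_basisA zero_basisA])
          fix y assume "y \<in> ?B" "y \<noteq> ((\<lambda>_. 0), {})"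
          then obtain \<beta> v where y: "y = (\<beta>, v)" and ne: "(\<beta>, v) \<noteq> ((\<lambda>_. 0), {})" by (cases y) auto
          have "mon ((\<lambda>_. 0), {}) (\<beta>, v) = (0::'a)" using ne by (simp add: mon_def)
          then show "(case y of (\<beta>, v) \<Rightarrow> ?T \<alpha> u \<beta> v) = 0" using y by simp
        qed
        then show "(case x of (\<alpha>, u) \<Rightarrow> \<Sum>(\<beta>, v)\<in>?B. ?T \<alpha> u \<beta> v) = (case x of (\<alpha>, u) \<Rightarrow> ?T \<alpha> u (\<lambda>_. 0) {})"
          using x by simp
      qed
      also have "\<dots> = (case (\<gamma>, w) of (\<alpha>, u) \<Rightarrow> ?T \<alpha> u (\<lambda>_. 0) {})"
      proof (rule sum_single[OF finite_basisA True])
        fix x assume "x \<in> ?B" "x \<noteq> (\<gamma>, w)"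
        then obtain \<alpha> u where x: "x = (\<alpha>, u)" and ne: "(\<alpha>, u) \<noteq> (\<gamma>, w)" by (cases x) auto
        have "\<not> ?C \<alpha> u (\<lambda>_. 0) {}" using ne by auto
        then show "(case x of (\<alpha>, u) \<Rightarrow> ?T \<alpha> u (\<lambda>_. 0) {}) = 0" using x by (simp only: case_prod_conv if_not_P if_False)
      qed
      also have "\<dots> = f (\<gamma>, w)" by (simp add: mon_def inv_count_empty)
      finally show ?thesis unfolding Pair .
    qed
  qed
qed

lemma derA_mon_Y0:
  assumes i: "i \<in> Y0 m" and b: "(\<beta>, u) \<in> basisA p m n t"
  shows "derA p m n t i (mon (\<beta>, u)) =
    (if \<beta> i \<ge> 1 then mon (\<beta>(i := \<beta> i - 1), u) else (\<lambda>_. (0::'a::field)))"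
proof
  fix x show "derA p m n t i (mon (\<beta>, u)) x = (if \<beta> i \<ge> 1 then mon (\<beta>(i := \<beta> i - 1), u) else (\<lambda>_. (0::'a::field))) x"
  proof (cases x)
    case (Pair \<gamma> w)
    show ?thesis
    proof (cases "(\<gamma>, w) \<in> basisA p m n t")
      case True
      have "(\<gamma>(i := \<gamma> i + 1) = \<beta>) \<longleftrightarrow> (\<beta> i \<ge> 1 \<and> \<gamma> = \<beta>(i := \<beta> i - 1))"
        by (auto simp: fun_eq_iff)
      then show ?thesis using True i unfolding Pair derA_def mon_def by auto
    next
      case False
      have "\<not> (\<beta> i \<ge> 1 \<and> \<gamma> = \<beta>(i := \<beta> i - 1) \<and> w = u)"
      proof
        assume h: "\<beta> i \<ge> 1 \<and> \<gamma> = \<beta>(i := \<beta> i - 1) \<and> w = u"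
        have "(\<gamma>, w) \<in> basisA p m n t" using h by (intro basisA_sub[OF b]) auto
        then show False using False by simp
      qed
      then show ?thesis using False unfolding Pair derA_def mon_def by auto
    qed
  qed
qed

lemma derA_mon_notY0_empty:
  assumes "r \<notin> Y0 m"
  shows "derA p m n t r (mon (\<beta>, {})) = (\<lambda>_. (0::'a::field))"
  using assms unfolding derA_def mon_def by (auto intro!: ext)

lemma derA_one: "derA p m n t r (mon ((\<lambda>_. 0), {})) = (\<lambda>_. (0::'a::field))"
  unfolding derA_def mon_def by (auto intro!: ext simp: fun_eq_iff)

lemma finite_Y: "finite (Y m n)" by (simp add: Y_def Y0_def Y1_def)

lemma actW_Mw:
  assumes "r0 \<in> Y m n"
  shows "actW p m n t (Mw r0 a0) g = multA p m n t (mon a0) (derA p m n t r0 g)"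
proof
  fix a
  have "actW p m n t (Mw r0 a0) g a = (\<Sum>r\<in>Y m n. multA p m n t (Mw r0 a0 r) (derA p m n t r g) a)"
    unfolding actW_def by simp
  also have "\<dots> = multA p m n t (Mw r0 a0 r0) (derA p m n t r0 g) a"
    by (rule sum_single) (auto simp: assms Mw_def multA_zero_left finite_Y)
  finally show "actW p m n t (Mw r0 a0) g a = multA p m n t (mon a0) (derA p m n t r0 g) a"
    by (simp add: Mw_def)
qed

definition ee :: "nat \<Rightarrow> nat \<Rightarrow> nat \<Rightarrow> nat" where "ee l b = (\<lambda>i. if i = l then b else 0)"

lemma Wev_carrier: "Z \<in> Wev p m n t \<Longrightarrow> Z s \<in> carrierA p m n t"
  unfolding Wev_def carrierA_def by auto

lemma derA_carrier: "derA p m n t r g \<in> carrierA p m n t"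
  unfolding derA_def carrierA_def by auto

lemma mon_carrier: "a \<in> basisA p m n t \<Longrightarrow> mon a \<in> carrierA p m n t"
  unfolding mon_def carrierA_def by auto

lemma Y0_Y: "i \<in> Y0 m \<Longrightarrow> i \<in> Y m n" by (simp add: Y_def)
lemma Y1_Y: "i \<in> Y1 m n \<Longrightarrow> i \<in> Y m n" by (simp add: Y_def)
lemma Y1_notY0: "i \<in> Y1 m n \<Longrightarrow> i \<notin> Y0 m" by (simp add: Y0_def Y1_def)

lemma actW_zero_arg: "actW p m n t Z (\<lambda>_. 0) = (\<lambda>_. 0)"
  unfolding actW_def by (auto intro!: ext simp: derA_zero multA_zero_right)

lemma brW_del:
  assumes i: "i \<in> Y0 m" and Z: "Z \<in> Wev p m n t"
  shows "brW p m n t (Mw i ((\<lambda>_. 0), {})) Z = (\<lambda>s. derA p m n t i (Z s))"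
proof (intro ext)
  fix s a
  have 1: "actW p m n t (Mw i ((\<lambda>_. 0), {})) (Z s) = derA p m n t i (Z s)"
    using Y0_Y[OF i] by (simp add: actW_Mw multA_one_left derA_carrier)
  have 2: "actW p m n t Z (Mw i ((\<lambda>_. 0), {}) s) = (\<lambda>_. 0)"
    unfolding actW_def Mw_def by (auto intro!: ext sum.neutral simp: derA_one derA_zero multA_zero_right)
  show "brW p m n t (Mw i ((\<lambda>_. 0), {})) Z s a = derA p m n t i (Z s) a"
    unfolding brW_def 1 2 by simp
qed

lemma prod_single:
  assumes "finite S" "k \<in> S" "\<And>i. i \<in> S \<Longrightarrow> i \<noteq> k \<Longrightarrow> f i = 1"
  shows "prod f S = f k"
  using assms by (metis (mono_tags, lifting) prod.remove prod.neutral mult.right_neutral DiffE insertCI)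

lemma finite_Y0: "finite (Y0 m)" by (simp add: Y0_def)

lemma derA_ee1:
  assumes k: "k \<in> Y0 m" and b: "(ee k 1, {}) \<in> basisA p m n t"
  shows "derA p m n t r (mon (ee k 1, {})) = (if r = k then mon ((\<lambda>_. 0), {}) else (\<lambda>_. (0::'a::field)))"
proof (cases "r \<in> Y0 m")
  case True
  have e: "(\<lambda>i. if i = k then Suc 0 else 0)(k := 0) = (\<lambda>_. 0::nat)" by (auto simp: fun_eq_iff)
  show ?thesis using derA_mon_Y0[OF True b] k by (auto simp: ee_def e)
next
  case False
  then show ?thesis using k derA_mon_notY0_empty[OF False] by auto
qed

lemma actW_Z_sum_single:
  assumes "r0 \<in> Y m n" "\<And>r. derA p m n t r h = (if r = r0 then mon ((\<lambda>_. 0), {}) else (\<lambda>_. (0::'a::field)))"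
    and Z: "Z \<in> Wev p m n t"
  shows "actW p m n t Z h = Z r0"
proof (intro ext)
  fix a
  have "actW p m n t Z h a = (\<Sum>r\<in>Y m n. multA p m n t (Z r) (derA p m n t r h) a)"
    unfolding actW_def by simp
  also have "\<dots> = multA p m n t (Z r0) (derA p m n t r0 h) a"
    by (rule sum_single) (auto simp: assms multA_zero_right finite_Y)
  also have "\<dots> = Z r0 a" using assms(2)[of r0] by (simp add: multA_one_right Wev_carrier[OF Z])
  finally show "actW p m n t Z h a = Z r0 a" .
qed

lemma brW_tor0:
  assumes k: "k \<in> Y0 m" and b: "(ee k 1, {}) \<in> basisA p m n t" and Z: "Z \<in> Wev p m n t"
  shows "brW p m n t (Mw k (ee k 1, {})) Z s (\<gamma>, w) = (of_nat (\<gamma> k) - (if s = k then 1 else 0)) * Z s (\<gamma>, w)"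
proof -
  have A: "actW p m n t (Mw k (ee k 1, {})) (Z s) (\<gamma>, w) = of_nat (\<gamma> k) * Z s (\<gamma>, w)"
  proof -
    have "actW p m n t (Mw k (ee k 1, {})) (Z s) (\<gamma>, w) = multA p m n t (mon (ee k 1, {})) (derA p m n t k (Z s)) (\<gamma>, w)"
      using Y0_Y[OF k] by (simp add: actW_Mw)
    also have "\<dots> = (if (\<gamma>,w) \<in> basisA p m n t \<and> (\<forall>i. ee k 1 i \<le> \<gamma> i) \<and> {} \<subseteq> w
     then of_nat (\<Prod>i\<in>Y0 m. \<gamma> i choose ee k 1 i) * (-1)^inv_count {} (w - {}) * derA p m n t k (Z s) (\<lambda>i. \<gamma> i - ee k 1 i, w - {})
     else 0)" by (rule multA_mon_left[OF b derA_carrier])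
    also have "\<dots> = of_nat (\<gamma> k) * Z s (\<gamma>, w)"
    proof (cases "(\<gamma>,w) \<in> basisA p m n t")
      case False
      then have "Z s (\<gamma>, w) = 0" using Z unfolding Wev_def by auto
      then show ?thesis using False by simp
    next
      case True
      show ?thesis
      proof (cases "\<gamma> k \<ge> 1")
        case c: True
        have le: "\<forall>i. ee k 1 i \<le> \<gamma> i" using c by (auto simp: ee_def)
        have pr: "(\<Prod>i\<in>Y0 m. \<gamma> i choose ee k 1 i) = \<gamma> k"
          by (subst prod_single[OF finite_Y0 k]) (auto simp: ee_def)
        have bb: "(\<lambda>i. \<gamma> i - ee k 1 i, w) \<in> basisA p m n t"
          by (rule basisA_sub[OF True]) auto
        have eqg: "(\<lambda>i. \<gamma> i - ee k (Suc 0) i)(k := Suc (\<gamma> k - ee k (Suc 0) k)) = \<gamma>"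
          using c by (auto simp: ee_def fun_eq_iff)
        have "derA p m n t k (Z s) (\<lambda>i. \<gamma> i - ee k 1 i, w) = Z s (\<gamma>, w)"
          using bb k unfolding derA_def by (simp add: eqg)
        then show ?thesis using True le pr by (simp add: inv_count_empty)
      next
        case c: False
        then have "\<not> (\<forall>i. ee k 1 i \<le> \<gamma> i)" by (auto simp: ee_def)
        moreover have "\<gamma> k = 0" using c by simp
        ultimately show ?thesis by auto
      qed
    qed
    finally show ?thesis .
  qed
  have B: "actW p m n t Z (Mw k (ee k 1, {}) s) (\<gamma>, w) = (if s = k then 1 else 0) * Z s (\<gamma>, w)"
  proof (cases "s = k")
    case True
    have "actW p m n t Z (mon (ee k 1, {})) = Z k"
      by (rule actW_Z_sum_single[OF Y0_Y[OF k] derA_ee1[OF k b] Z])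
    then show ?thesis using True by (simp add: Mw_def)
  next
    case False
    then show ?thesis by (simp add: Mw_def actW_zero_arg)
  qed
  show ?thesis unfolding brW_def A B by (simp add: algebra_simps)
qed

lemma inv_count_single: "inv_count {k} v = card {j \<in> v. j < k}"
proof -
  have "{(i, j). i \<in> {k} \<and> j \<in> v \<and> j < i} = (\<lambda>j. (k, j)) ` {j \<in> v. j < k}" by auto
  moreover have "inj_on (\<lambda>j. (k, j)) {j \<in> v. j < k}" by (auto simp: inj_on_def)
  ultimately show ?thesis unfolding inv_count_def by (simp add: card_image)
qed

lemma derA_odd1:
  assumes k: "k \<in> Y1 m n"
  shows "derA p m n t r (mon ((\<lambda>_. 0), {k})) = (if r = k then mon ((\<lambda>_. 0), {}) else (\<lambda>_. (0::'a::field)))"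
proof (intro ext)
  fix x show "derA p m n t r (mon ((\<lambda>_. 0), {k})) x = (if r = k then mon ((\<lambda>_. 0), {}) else (\<lambda>_. (0::'a::field))) x"
  proof (cases x)
    case (Pair \<gamma> w)
    have kn: "k \<notin> Y0 m" using Y1_notY0[OF k] .
    show ?thesis
    proof (cases "(\<gamma>, w) \<in> basisA p m n t")
      case False
      then have "(\<gamma>, w) \<noteq> ((\<lambda>_. 0), {})" using zero_basisA by metis
      then show ?thesis using False unfolding Pair derA_def mon_def by auto
    next
      case True
      show ?thesis
      proof (cases "r \<in> Y0 m")
        case r: True
        have "\<gamma>(r := \<gamma> r + 1) \<noteq> (\<lambda>_. 0)" by (metis fun_upd_same add_eq_0_iff_both_eq_0 one_neq_zero)
        then show ?thesis using True r kn unfolding Pair derA_def mon_def by auto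
      next
        case r: False
        show ?thesis
        proof (cases "r \<in> Y1 m n \<and> r \<notin> w")
          case c: True
          have "(insert r w = {k}) \<longleftrightarrow> (r = k \<and> w = {})" using c by auto
          then show ?thesis using True r c unfolding Pair derA_def mon_def by auto
        next
          case c: False
          then have "r = k \<longrightarrow> w \<noteq> {}" using k by auto
          then show ?thesis using True r c unfolding Pair derA_def mon_def by auto
        qed
      qed
    qed
  qed
qed

lemma brW_tor1:
  assumes k: "k \<in> Y1 m n" and Z: "Z \<in> Wev p m n t"
  shows "brW p m n t (Mw k ((\<lambda>_. 0), {k})) Z s (\<gamma>, w) = ((if k \<in> w then 1 else 0) - (if s = k then 1 else 0)) * Z s (\<gamma>, w)"
proof -
  have b: "((\<lambda>_. 0), {k}) \<in> basisA p m n t" using k unfolding basisA_def by auto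
  have kn: "k \<notin> Y0 m" using Y1_notY0[OF k] .
  have A: "actW p m n t (Mw k ((\<lambda>_. 0), {k})) (Z s) (\<gamma>, w) = (if k \<in> w then 1 else 0) * Z s (\<gamma>, w)"
  proof -
    have "actW p m n t (Mw k ((\<lambda>_. 0), {k})) (Z s) (\<gamma>, w) = multA p m n t (mon ((\<lambda>_. 0), {k})) (derA p m n t k (Z s)) (\<gamma>, w)"
      using Y1_Y[OF k] by (simp add: actW_Mw)
    also have "\<dots> = (if (\<gamma>,w) \<in> basisA p m n t \<and> (\<forall>i. (0::nat) \<le> \<gamma> i) \<and> {k} \<subseteq> w
     then of_nat (\<Prod>i\<in>Y0 m. \<gamma> i choose 0) * (-1)^inv_count {k} (w - {k}) * derA p m n t k (Z s) (\<lambda>i. \<gamma> i - 0, w - {k})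
     else 0)" by (rule multA_mon_left[OF b derA_carrier])
    also have "\<dots> = (if k \<in> w then 1 else 0) * Z s (\<gamma>, w)"
    proof (cases "(\<gamma>,w) \<in> basisA p m n t")
      case False
      then have "Z s (\<gamma>, w) = 0" using Z unfolding Wev_def by auto
      then show ?thesis using False by simp
    next
      case True
      show ?thesis
      proof (cases "k \<in> w")
        case c: True
        have bb: "(\<gamma>, w - {k}) \<in> basisA p m n t" by (rule basisA_sub[OF True]) auto
        have ins: "insert k (w - {k}) = w" using c by auto
        have cc: "{j \<in> w - {k}. j < k} = {j \<in> w. j < k}" by auto
        have "derA p m n t k (Z s) (\<gamma>, w - {k}) = (-1) ^ card {j \<in> w. j < k} * Z s (\<gamma>, w)"
          using bb k kn c unfolding derA_def by (simp add: ins cc insert_absorb conj_commute[of "_ \<noteq> k"] cong: conj_cong)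
        moreover have "((-1::'a) ^ card {j \<in> w. j < k}) * (-1) ^ card {j \<in> w. j < k} = 1"
          by (simp flip: power_add)
        moreover have "{j \<in> w. j \<noteq> k \<and> j < k} = {j \<in> w. j < k}" by auto
        ultimately show ?thesis using True c by (simp add: inv_count_single cc mult.assoc[symmetric])
      next
        case c: False
        then show ?thesis by simp
      qed
    qed
    finally show ?thesis .
  qed
  have B: "actW p m n t Z (Mw k ((\<lambda>_. 0), {k}) s) (\<gamma>, w) = (if s = k then 1 else 0) * Z s (\<gamma>, w)"
  proof (cases "s = k")
    case True
    have "actW p m n t Z (mon ((\<lambda>_. 0), {k})) = Z k"
      by (rule actW_Z_sum_single[OF Y1_Y[OF k] derA_odd1[OF k] Z])
    then show ?thesis using True by (simp add: Mw_def)
  next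
    case False
    then show ?thesis by (simp add: Mw_def actW_zero_arg)
  qed
  show ?thesis unfolding brW_def A B by (simp add: algebra_simps)
qed

lemma mult_ee_mon:
  assumes l: "l \<in> Y0 m" and a: "(\<alpha>, u) \<in> basisA p m n t" and b: "b \<le> \<alpha> l"
  shows "multA p m n t (mon (ee l b, {})) (mon (\<alpha>(l := \<alpha> l - b), u)) = (\<lambda>x. of_nat (\<alpha> l choose b) * (mon (\<alpha>, u) x :: 'a::field))"
proof (intro ext)
  fix x show "multA p m n t (mon (ee l b, {})) (mon (\<alpha>(l := \<alpha> l - b), u)) x = of_nat (\<alpha> l choose b) * (mon (\<alpha>, u) x :: 'a)"
  proof (cases x)
    case (Pair \<gamma> w)
    have eb: "(ee l b, {}) \<in> basisA p m n t" by (rule basisA_sub[OF a]) (auto simp: ee_def b)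
    have ab: "(\<alpha>(l := \<alpha> l - b), u) \<in> basisA p m n t" by (rule basisA_sub[OF a]) auto
    have "multA p m n t (mon (ee l b, {})) (mon (\<alpha>(l := \<alpha> l - b), u)) (\<gamma>, w) =
      (if (\<gamma>,w) \<in> basisA p m n t \<and> (\<forall>i. ee l b i \<le> \<gamma> i) \<and> {} \<subseteq> w
     then of_nat (\<Prod>i\<in>Y0 m. \<gamma> i choose ee l b i) * (-1)^inv_count {} (w - {}) * (mon (\<alpha>(l := \<alpha> l - b), u) (\<lambda>i. \<gamma> i - ee l b i, w - {}) :: 'a)
     else 0)" by (rule multA_mon_left[OF eb mon_carrier[OF ab]])
    also have "\<dots> = of_nat (\<alpha> l choose b) * (mon (\<alpha>, u) (\<gamma>, w) :: 'a)"
    proof (cases "(\<gamma>, w) = (\<alpha>, u)")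
      case True
      have le: "\<forall>i. ee l b i \<le> \<alpha> i" using b by (auto simp: ee_def)
      have eq: "(\<lambda>i. \<alpha> i - ee l b i) = \<alpha>(l := \<alpha> l - b)" by (auto simp: ee_def fun_eq_iff)
      have pr: "(\<Prod>i\<in>Y0 m. \<alpha> i choose ee l b i) = \<alpha> l choose b"
        by (subst prod_single[OF finite_Y0 l]) (auto simp: ee_def)
      show ?thesis using True a le by (simp add: eq pr mon_def inv_count_empty)
    next
      case False
      have "\<not> ((\<forall>i. ee l b i \<le> \<gamma> i) \<and> (\<lambda>i. \<gamma> i - ee l b i) = \<alpha>(l := \<alpha> l - b) \<and> w = u)"
      proof
        assume h: "(\<forall>i. ee l b i \<le> \<gamma> i) \<and> (\<lambda>i. \<gamma> i - ee l b i) = \<alpha>(l := \<alpha> l - b) \<and> w = u"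
        have "\<gamma> = \<alpha>"
        proof
          fix i
          have "\<gamma> i - ee l b i = (\<alpha>(l := \<alpha> l - b)) i" using h by metis
          then show "\<gamma> i = \<alpha> i" using h b by (cases "i = l") (auto simp: ee_def split: if_splits)
        qed
        then show False using h False by simp
      qed
      then show ?thesis using False by (auto simp: mon_def)
    qed
    finally show ?thesis unfolding Pair .
  qed
qed

lemma mult_mon_ee:
  assumes l: "l \<in> Y0 m" and a: "(\<alpha>, u) \<in> basisA p m n t" and b: "b \<le> \<alpha> l"
  shows "multA p m n t (mon (\<alpha>(l := \<alpha> l - b), u)) (mon (ee l b, {})) = (\<lambda>x. of_nat (\<alpha> l choose b) * (mon (\<alpha>, u) x :: 'a::field))"
proof (intro ext)
  fix x show "multA p m n t (mon (\<alpha>(l := \<alpha> l - b), u)) (mon (ee l b, {})) x = of_nat (\<alpha> l choose b) * (mon (\<alpha>, u) x :: 'a)"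
  proof (cases x)
    case (Pair \<gamma> w)
    have eb: "(ee l b, {}) \<in> basisA p m n t" by (rule basisA_sub[OF a]) (auto simp: ee_def b)
    have ab: "(\<alpha>(l := \<alpha> l - b), u) \<in> basisA p m n t" by (rule basisA_sub[OF a]) auto
    have "multA p m n t (mon (\<alpha>(l := \<alpha> l - b), u)) (mon (ee l b, {})) (\<gamma>, w) =
      (if (\<gamma>,w) \<in> basisA p m n t \<and> (\<forall>i. (\<alpha>(l := \<alpha> l - b)) i \<le> \<gamma> i) \<and> u \<subseteq> w
     then of_nat (\<Prod>i\<in>Y0 m. \<gamma> i choose (\<alpha>(l := \<alpha> l - b)) i) * (-1)^inv_count u (w - u) * (mon (ee l b, {}) (\<lambda>i. \<gamma> i - (\<alpha>(l := \<alpha> l - b)) i, w - u) :: 'a)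
     else 0)" by (rule multA_mon_left[OF ab mon_carrier[OF eb]])
    also have "\<dots> = of_nat (\<alpha> l choose b) * (mon (\<alpha>, u) (\<gamma>, w) :: 'a)"
    proof (cases "(\<gamma>, w) = (\<alpha>, u)")
      case True
      have le: "\<forall>i. (\<alpha>(l := \<alpha> l - b)) i \<le> \<alpha> i" by auto
      have eq: "(\<lambda>i. \<alpha> i - (\<alpha>(l := \<alpha> l - b)) i) = ee l b" using b by (auto simp: ee_def fun_eq_iff)
      have pr: "(\<Prod>i\<in>Y0 m. \<alpha> i choose (\<alpha>(l := \<alpha> l - b)) i) = \<alpha> l choose b"
        by (subst prod_single[OF finite_Y0 l]) (auto simp: binomial_symmetric[OF b, symmetric])
      show ?thesis using True a le by (simp del: fun_upd_apply add: eq pr mon_def inv_count_empty)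
    next
      case False
      have "\<not> ((\<forall>i. (\<alpha>(l := \<alpha> l - b)) i \<le> \<gamma> i) \<and> u \<subseteq> w \<and> (\<lambda>i. \<gamma> i - (\<alpha>(l := \<alpha> l - b)) i) = ee l b \<and> w - u = {})"
      proof
        assume h: "(\<forall>i. (\<alpha>(l := \<alpha> l - b)) i \<le> \<gamma> i) \<and> u \<subseteq> w \<and> (\<lambda>i. \<gamma> i - (\<alpha>(l := \<alpha> l - b)) i) = ee l b \<and> w - u = {}"
        have "\<gamma> = \<alpha>"
        proof
          fix i
          have "\<gamma> i - (\<alpha>(l := \<alpha> l - b)) i = ee l b i" using h by metis
          moreover have "(\<alpha>(l := \<alpha> l - b)) i \<le> \<gamma> i" using h by blast
          ultimately show "\<gamma> i = \<alpha> i" using b by (cases "i = l") (auto simp: ee_def split: if_splits)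
        qed
        moreover have "w = u" using h by auto
        ultimately show False using False by simp
      qed
      then have l0: "((\<forall>i. (\<alpha>(l := \<alpha> l - b)) i \<le> \<gamma> i) \<and> u \<subseteq> w) \<longrightarrow>
          mon (ee l b, {}) (\<lambda>i. \<gamma> i - (\<alpha>(l := \<alpha> l - b)) i, w - u) = (0::'a)"
        unfolding mon_def by (simp del: fun_upd_apply) blast
      have r0: "mon (\<alpha>, u) (\<gamma>, w) = (0::'a)" using False by (simp add: mon_def)
      show ?thesis using l0 r0 by (simp del: fun_upd_apply)
    qed
    finally show ?thesis unfolding Pair .
  qed
qed

lemma brW_tool:
  assumes l: "l \<in> Y0 m" and a: "(\<alpha>, u) \<in> basisA p m n t" and b1: "1 \<le> b" and b: "b \<le> \<alpha> l"
    and r: "r \<in> Y m n"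
  shows "brW p m n t (Mw l (ee l b, {})) (Mw r (\<alpha>(l := \<alpha> l - (b - 1)), u)) =
     (\<lambda>s x. (of_nat (\<alpha> l choose b) - (if r = l then of_nat (\<alpha> l choose (b - 1)) else 0)) * (Mw r (\<alpha>, u) s x :: 'a::field))"
proof (intro ext)
  fix s x
  let ?g = "\<alpha>(l := \<alpha> l - (b - 1))"
  have gb: "(?g, u) \<in> basisA p m n t" by (rule basisA_sub[OF a]) auto
  have eb: "(ee l b, {}) \<in> basisA p m n t" by (rule basisA_sub[OF a]) (auto simp: ee_def b)
  have A: "actW p m n t (Mw l (ee l b, {})) (Mw r (?g, u) s) x = (if s = r then of_nat (\<alpha> l choose b) * mon (\<alpha>, u) x else (0::'a))"
  proof (cases "s = r")
    case True
    have e1: "?g(l := ?g l - 1) = \<alpha>(l := \<alpha> l - b)" using b1 b by (auto simp: fun_eq_iff)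
    have c: "?g l \<ge> 1" using b b1 by simp
    have d1: "derA p m n t l (mon (?g, u)) = mon (\<alpha>(l := \<alpha> l - b), u)"
      using derA_mon_Y0[OF l gb] by (simp only: if_P[OF c] e1)
    have m1: "Mw r (?g, u) s = mon (?g, u)" using True by (simp add: Mw_def)
    show ?thesis unfolding actW_Mw[OF Y0_Y[OF l]] m1 d1 mult_ee_mon[OF l a b] using True by simp
  next
    case False
    then have m1: "Mw r (?g, u) s = (\<lambda>_. 0)" by (simp add: Mw_def)
    show ?thesis unfolding actW_Mw[OF Y0_Y[OF l]] m1 derA_zero multA_zero_right using False by simp
  qed
  have B: "actW p m n t (Mw r (?g, u)) (Mw l (ee l b, {}) s) x = (if s = l \<and> r = l then of_nat (\<alpha> l choose (b - 1)) * mon (\<alpha>, u) x else (0::'a))"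
  proof (cases "s = l")
    case True
    have d: "derA p m n t r (mon (ee l b, {})) = (if r = l then mon (ee l (b - 1), {}) else (\<lambda>_. (0::'a)))"
    proof (cases "r \<in> Y0 m")
      case True
      have e2: "(ee l b)(l := ee l b l - 1) = ee l (b - 1)" by (auto simp: ee_def fun_eq_iff)
      have e3: "(\<lambda>i. if i = l then b else 0)(l := b - Suc 0) = (\<lambda>i. if i = l then b - Suc 0 else 0)" by (auto simp: fun_eq_iff)
      show ?thesis using derA_mon_Y0[OF True eb] b1 by (auto simp: e2) (auto simp: ee_def e3)
    next
      case False
      then show ?thesis using l derA_mon_notY0_empty[OF False] by auto
    qed
    have bb: "b - 1 \<le> \<alpha> l" using b by simp
    have m1: "Mw l (ee l b, {}) s = mon (ee l b, {})" using True by (simp add: Mw_def)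
    have "actW p m n t (Mw r (?g, u)) (Mw l (ee l b, {}) s) x = multA p m n t (mon (?g, u)) (derA p m n t r (mon (ee l b, {}) :: mono \<Rightarrow> 'a)) x"
      by (simp only: actW_Mw[OF r] m1)
    also have "\<dots> = (if r = l then of_nat (\<alpha> l choose (b - 1)) * mon (\<alpha>, u) x else 0)"
    proof -
      have mm: "multA p m n t (mon (?g, u)) (mon (ee l (b - 1), {})) = (\<lambda>x. of_nat (\<alpha> l choose (b - 1)) * (mon (\<alpha>, u) x :: 'a))"
        by (rule mult_mon_ee[OF l a bb])
      show ?thesis unfolding d by (cases "r = l") (simp_all only: if_True if_False mm multA_zero_right simp_thms)
    qed
    finally show ?thesis using True by simp
  next
    case False
    then show ?thesis using r by (simp add: Mw_def actW_zero_arg)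
  qed
  show "brW p m n t (Mw l (ee l b, {})) (Mw r (?g, u)) s x =
     (of_nat (\<alpha> l choose b) - (if r = l then of_nat (\<alpha> l choose (b - 1)) else 0)) * (Mw r (\<alpha>, u) s x :: 'a)"
    unfolding brW_def A B by (auto simp: Mw_def algebra_simps)
qed

lemma brW_zero_right: "brW p m n t X (\<lambda>r a. 0) = (\<lambda>r a. (0::'a::field))"
proof -
  have "actW p m n t X (\<lambda>a. 0) = (\<lambda>_. (0::'a))" by (rule actW_zero_arg)
  moreover have "actW p m n t (\<lambda>r a. 0) g = (\<lambda>_. (0::'a))" for g :: "mono \<Rightarrow> 'a"
    unfolding actW_def by (auto intro!: ext sum.neutral simp: multA_zero_left[unfolded fun_eq_iff, simplified])
  ultimately show ?thesis unfolding brW_def by (auto intro!: ext)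
qed

lemma brW_zero_left: "brW p m n t (\<lambda>r a. 0) Z = (\<lambda>r a. (0::'a::field))"
proof -
  have "actW p m n t Z (\<lambda>a. 0) = (\<lambda>_. (0::'a))" by (rule actW_zero_arg)
  moreover have "actW p m n t (\<lambda>r a. 0) g = (\<lambda>_. (0::'a))" for g :: "mono \<Rightarrow> 'a"
    unfolding actW_def by (auto intro!: ext sum.neutral simp: multA_zero_left[unfolded fun_eq_iff, simplified])
  ultimately show ?thesis unfolding brW_def by (auto intro!: ext)
qed

lemma Mw_Wev:
  assumes "r \<in> Y m n" "a \<in> basisA p m n t" "even (card (snd a) + tau m r)"
  shows "(Mw r a :: 'a::field wel) \<in> Wev p m n t"
  using assms unfolding Wev_def Mw_def mon_def by auto

lemma Mw_Wdeg:
  assumes "r \<in> Y m n" "a \<in> basisA p m n t" "even (card (snd a) + tau m r)"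
  shows "(Mw r a :: 'a::field wel) \<in> Wdeg p m n t (int (\<Sum>j\<in>Y0 m. fst a j) + int (card (snd a)) - 1)"
  using Mw_Wev[OF assms] unfolding Wdeg_def Mw_def mon_def by (auto split: if_splits)

lemma Wdeg_low:
  assumes "X \<in> Wdeg p m n t i" "i < -1"
  shows "X = (\<lambda>r a. 0)"
proof (intro ext)
  fix r a show "X r a = 0"
  proof (rule ccontr)
    assume "X r a \<noteq> 0"
    then have "int (\<Sum>j\<in>Y0 m. fst a j) + int (card (snd a)) - 1 = i" using assms(1) unfolding Wdeg_def by blast
    then show False using assms(2) by linarith
  qed
qed

lemma Wdeg_Wev: "X \<in> Wdeg p m n t i \<Longrightarrow> X \<in> Wev p m n t"
  unfolding Wdeg_def by auto

lemma sum_upd_nat: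
  assumes "finite S" "i \<in> S"
  shows "sum (\<alpha>(i := v)) S + \<alpha> i = sum \<alpha> S + (v::nat)"
proof -
  have "sum (\<alpha>(i := v)) S = v + sum (\<alpha>(i := v)) (S - {i})" using assms by (simp add: sum.remove)
  moreover have "sum (\<alpha>(i := v)) (S - {i}) = sum \<alpha> (S - {i})" by (intro sum.cong) auto
  moreover have "sum \<alpha> S = \<alpha> i + sum \<alpha> (S - {i})" using assms by (simp add: sum.remove)
  ultimately show ?thesis by simp
qed

lemma tau_Y0: "i \<in> Y0 m \<Longrightarrow> tau m i = 0" by (simp add: tau_def)
lemma tau_Y1: "i \<in> Y1 m n \<Longrightarrow> tau m i = 1" by (simp add: tau_def Y1_notY0)

lemma coeff_monom_plus1_power:
  fixes N c :: nat
  assumes "N > 0"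
  shows "coeff ((monom (1::'a::comm_ring_1) N + 1) ^ c) N = of_nat c"
proof -
  have "(monom (1::'a) N + 1) ^ c = (\<Sum>k\<le>c. of_nat (c choose k) * monom 1 N ^ k * 1 ^ (c - k))"
    by (rule binomial_ring)
  also have "\<dots> = (\<Sum>k\<le>c. monom (of_nat (c choose k)) (N * k))"
    by (intro sum.cong refl) (simp add: monom_power of_nat_poly smult_monom)
  finally have "coeff ((monom (1::'a) N + 1) ^ c) N = (\<Sum>k\<le>c. coeff (monom (of_nat (c choose k)) (N * k)) N)"
    by (simp add: coeff_sum)
  also have "\<dots> = (\<Sum>k\<le>c. if k = 1 then of_nat c else 0)"
    using assms by (intro sum.cong refl) auto
  also have "\<dots> = of_nat c" by (cases "c = 0") (simp_all add: sum.delta)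
  finally show ?thesis .
qed

lemma NT1:
  fixes p q :: nat
  assumes p: "prime p" and ch: "CHAR('a::field) = p" and q: "q > 0" and np: "\<not> (\<exists>k. q = p ^ k)"
  shows "\<exists>b. 0 < b \<and> b < q \<and> of_nat (q choose b) \<noteq> (0::'a)"
proof -
  obtain c where qc: "q = p ^ multiplicity p q * c" and nd: "\<not> p dvd c"
    using multiplicity_decompose'[of q p] q p by (metis not_prime_unit gr0_implies_Suc nat.distinct(1))
  define N where "N = p ^ multiplicity p q"
  have N0: "N > 0" using p N_def by (simp add: prime_gt_0_nat)
  have c0: "c \<noteq> 0" using qc q by (metis mult_0_right less_irrefl)
  have c1: "c \<noteq> 1" using qc np by auto
  have Nq: "N < q" using qc c0 c1 N0 unfolding N_def[symmetric]
    by (metis One_nat_def Suc_lessI less_one mult.commute mult_less_cancel2 nat_mult_1_right not_gr0)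
  have pc: "prime CHAR('a poly)" using p ch by simp
  have X1: "[:1, 1:] = monom (1::'a) 1 + 1" by (simp add: monom_altdef one_pCons)
  have "[:1, 1::'a:] ^ q = ([:1, 1:] ^ N) ^ c" unfolding N_def by (subst qc) (simp add: power_mult)
  also have "[:1, 1::'a:] ^ N = monom 1 1 ^ N + 1 ^ N"
    unfolding X1 by (rule freshmans_dream'[OF pc]) (simp add: N_def ch)
  also have "\<dots> = monom 1 N + 1" by (simp add: monom_power)
  finally have "coeff ([:1, 1::'a:] ^ q) N = coeff ((monom 1 N + 1) ^ c) N" by simp
  also have "\<dots> = of_nat c" by (rule coeff_monom_plus1_power[OF N0])
  finally have "of_nat (q choose N) = (of_nat c :: 'a)"
    using coeff_linear_poly_power[of N q "1::'a" 1] Nq by simp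
  moreover have "of_nat c \<noteq> (0::'a)" using nd ch by (simp add: of_nat_eq_0_iff_char_dvd)
  ultimately show ?thesis using N0 Nq by auto
qed

lemma NT2:
  fixes p q :: nat
  assumes p: "prime p" and ch: "CHAR('a::field) = p" and q: "q > 0" and np: "\<not> (\<exists>k. q = p ^ k)"
    and q0: "of_nat q = (0::'a)"
  shows "\<exists>b. 2 \<le> b \<and> b \<le> q - 1 \<and> of_nat (q choose b) \<noteq> (of_nat (q choose (b - 1)) :: 'a)"
proof (rule ccontr)
  assume "\<not> ?thesis"
  then have eq: "\<And>b. 2 \<le> b \<Longrightarrow> b \<le> q - 1 \<Longrightarrow> of_nat (q choose b) = (of_nat (q choose (b - 1)) :: 'a)" by auto
  have z: "1 \<le> b \<Longrightarrow> b \<le> q - 1 \<Longrightarrow> of_nat (q choose b) = (0::'a)" for b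
  proof (induction b)
    case 0 then show ?case by simp
  next
    case (Suc b)
    show ?case
    proof (cases "b = 0")
      case True then show ?thesis using q0 by simp
    next
      case False
      then have "of_nat (q choose Suc b) = (of_nat (q choose b) :: 'a)" using eq[of "Suc b"] Suc.prems by simp
      then show ?thesis using Suc False by simp
    qed
  qed
  obtain b where "0 < b" "b < q" "of_nat (q choose b) \<noteq> (0::'a)" using NT1[OF p ch q np] by blast
  then show False using z[of b] by simp
qed

definition cc :: "nat \<Rightarrow> (nat \<Rightarrow> nat) \<Rightarrow> nat \<Rightarrow> nat \<Rightarrow> 'a::field" where
  "cc r \<alpha> l b = of_nat (\<alpha> l choose b) - (if r = l then of_nat (\<alpha> l choose (b - 1)) else 0)"

definition goodb :: "nat \<Rightarrow> nat \<Rightarrow> (nat \<Rightarrow> nat) \<Rightarrow> nat \<Rightarrow> nat \<Rightarrow> 'a::field itself \<Rightarrow> bool" where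
  "goodb q r \<alpha> l b (T::'a itself) \<longleftrightarrow> 2 \<le> b \<and> b \<le> q - 1 \<and> b \<le> \<alpha> l \<and> (cc r \<alpha> l b :: 'a) \<noteq> 0"

lemma R1:
  assumes "l \<noteq> r" "2 \<le> \<alpha> l" "\<alpha> l \<le> q - 1"
  shows "\<exists>b. goodb q r \<alpha> l b TYPE('a::field)"
  using assms by (intro exI[of _ "\<alpha> l"]) (auto simp: goodb_def cc_def)

lemma R2:
  assumes p: "prime p" "p > 3" and ch: "CHAR('a::field) = p" and q: "q \<ge> 3"
    and a2: "2 \<le> \<alpha> r" and a1: "of_nat (\<alpha> r) = (1::'a)"
  shows "\<exists>b. goodb q r \<alpha> r b TYPE('a)"
proof (intro exI[of _ 2])
  let ?a = "\<alpha> r"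
  have ev: "even (?a * (?a - 1))" using a2 by (cases "even ?a") auto
  have "2 * (?a choose 2) = ?a * (?a - 1)" unfolding choose_two using ev by simp
  then have "(of_nat 2 :: 'a) * of_nat (?a choose 2) = of_nat ?a * of_nat (?a - 1)"
    by (metis of_nat_mult)
  also have "of_nat (?a - 1) = (of_nat ?a - 1 :: 'a)" using a2 by (simp add: of_nat_diff)
  finally have "(2::'a) * of_nat (?a choose 2) = 0" using a1 by simp
  moreover have "(2::'a) \<noteq> 0"
  proof
    assume "(2::'a) = 0"
    then have "of_nat 2 = (0::'a)" by simp
    then have "p dvd 2" using ch by (simp only: of_nat_eq_0_iff_char_dvd)
    then have "p \<le> 2" by (rule dvd_imp_le) simp
    then show False using p by simp
  qed
  ultimately have "of_nat (?a choose 2) = (0::'a)" by simp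
  then have "(cc r \<alpha> r 2 :: 'a) = -1" using a1 by (simp add: cc_def)
  then show "goodb q r \<alpha> r 2 TYPE('a)" using a2 q by (simp add: goodb_def)
qed

lemma R3:
  assumes "2 \<le> \<alpha> r" "\<alpha> r \<le> q - 1" "of_nat (\<alpha> r) = (0::'a::field)"
  shows "\<exists>b. goodb q r \<alpha> r b TYPE('a)"
proof (intro exI[of _ "\<alpha> r"])
  have "\<alpha> r choose (\<alpha> r - 1) = \<alpha> r" using assms(1) by (metis Suc_diff_1 binomial_Suc_n diff_Suc_1 less_le_trans pos2)
  then have "(cc r \<alpha> r (\<alpha> r) :: 'a) = 1" using assms by (simp add: cc_def)
  then show "goodb q r \<alpha> r (\<alpha> r) TYPE('a)" using assms by (simp add: goodb_def)
qed

lemma R4: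
  assumes p: "prime p" and ch: "CHAR('a::field) = p" and q: "q > 0" and np: "\<not> (\<exists>k. q = p ^ k)"
    and q0: "of_nat q = (0::'a)" and lr: "l \<noteq> r" and aq: "\<alpha> l = q"
  shows "\<exists>b. goodb q r \<alpha> l b TYPE('a)"
proof -
  obtain b where b: "0 < b" "b < q" "of_nat (q choose b) \<noteq> (0::'a)" using NT1[OF p ch q np] by blast
  have "b \<noteq> 1" using b q0 by auto
  then show ?thesis using b lr aq by (intro exI[of _ b]) (auto simp: goodb_def cc_def)
qed

lemma R5:
  assumes p: "prime p" and ch: "CHAR('a::field) = p" and q: "q > 0" and np: "\<not> (\<exists>k. q = p ^ k)"
    and q0: "of_nat q = (0::'a)" and aq: "\<alpha> r = q"
  shows "\<exists>b. goodb q r \<alpha> r b TYPE('a)"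
proof -
  obtain b where b: "2 \<le> b" "b \<le> q - 1" "of_nat (q choose b) \<noteq> (of_nat (q choose (b - 1)) :: 'a)"
    using NT2[OF p ch q np q0] by blast
  then show ?thesis using aq by (intro exI[of _ b]) (auto simp: goodb_def cc_def)
qed

lemma exists_good:
  fixes \<alpha> :: "nat \<Rightarrow> nat" and p q m n r s :: nat
  assumes p: "prime p" "p > 3" and ch: "CHAR('a::field) = p" and q: "q > 1" and np: "\<not> (\<exists>k. q = p ^ k)"
    and r: "r \<in> Y m n" and s: "s \<in> Y m n"
    and sa: "sum \<alpha> (Y0 m) + (if r \<in> Y1 m n then 1 else 0) = q + (if s \<in> Y1 m n then 1 else 0)"
    and w0: "\<forall>k\<in>Y0 m. (of_nat (\<alpha> k) :: 'a) + (if s = k then 1 else 0) = (if r = k then 1 else 0)"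
  shows "\<exists>l\<in>Y0 m. \<exists>b. goodb q r \<alpha> l b TYPE('a)"
proof -
  have fin: "finite (Y0 m)" by (simp add: Y0_def)
  have Y01: "\<And>x. x \<in> Y m n \<Longrightarrow> x \<in> Y1 m n \<longleftrightarrow> x \<notin> Y0 m" by (auto simp: Y_def Y0_def Y1_def)
  have le1: "\<And>l. l \<in> Y0 m \<Longrightarrow> \<alpha> l \<le> sum \<alpha> (Y0 m)" using fin by (simp add: member_le_sum)
  have le2: "\<And>l k. l \<in> Y0 m \<Longrightarrow> k \<in> Y0 m \<Longrightarrow> l \<noteq> k \<Longrightarrow> \<alpha> l + \<alpha> k \<le> sum \<alpha> (Y0 m)"
  proof -
    fix l k assume "l \<in> Y0 m" "k \<in> Y0 m" "l \<noteq> k"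
    then have "sum \<alpha> {l, k} \<le> sum \<alpha> (Y0 m)" using fin by (intro sum_mono2) auto
    then show "\<alpha> l + \<alpha> k \<le> sum \<alpha> (Y0 m)" using \<open>l \<noteq> k\<close> by simp
  qed
  have dv: "\<And>x. (of_nat x = (0::'a)) \<longleftrightarrow> p dvd x" using ch by (simp add: of_nat_eq_0_iff_char_dvd)
  have big: "\<And>x. p dvd x \<Longrightarrow> x > 0 \<Longrightarrow> x \<ge> p" by (simp add: dvd_imp_le)
  have p4: "p \<noteq> 4"
  proof
    assume "p = 4"
    moreover have "(2::nat) dvd 4" by simp
    ultimately show False using p(1) unfolding prime_nat_iff by (metis numeral_eq_iff semiring_norm(85,87,89) one_eq_numeral_iff)
  qed
  have p5: "p \<ge> 5" using p(2) p4 by simp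
  have ex_pos: "\<And>A. sum \<alpha> A > 0 \<Longrightarrow> \<exists>l\<in>A. \<alpha> l > 0"
  proof (rule ccontr)
    fix A assume "sum \<alpha> A > 0" "\<not> (\<exists>l\<in>A. \<alpha> l > 0)"
    then have "sum \<alpha> A = 0" by (intro sum.neutral) auto
    then show False using \<open>sum \<alpha> A > 0\<close> by simp
  qed
  have sw: "of_nat (sum \<alpha> (Y0 m)) + (if s \<in> Y0 m then 1 else 0) = (if r \<in> Y0 m then (1::'a) else 0)"
  proof -
    have "(\<Sum>k\<in>Y0 m. (of_nat (\<alpha> k) :: 'a) + (if s = k then 1 else 0)) = (\<Sum>k\<in>Y0 m. if r = k then 1 else 0)"
      using w0 by (intro sum.cong) auto
    then show ?thesis using fin by (simp add: sum.distrib sum.delta)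
  qed
  have q0: "of_nat q = (0::'a)"
  proof -
    have "(of_nat (sum \<alpha> (Y0 m) + (if r \<in> Y1 m n then 1 else 0)) :: 'a) = of_nat (q + (if s \<in> Y1 m n then 1 else 0))"
      using sa by simp
    then show ?thesis using sw Y01[OF r] Y01[OF s] by (auto split: if_splits simp: algebra_simps)
  qed
  have q3: "q \<ge> 2 * p"
  proof -
    have "p dvd q" using q0 dv by simp
    then obtain c where c: "q = p * c" by blast
    have "c \<noteq> 0" using c q by (cases "c = 0") auto
    moreover have "c \<noteq> 1" using c np by (metis power_one_right mult_1_right)
    ultimately have "c \<ge> 2" by simp
    then show ?thesis using c by simp
  qed
  have q0': "q > 0" using q by simp
  show ?thesis
  proof (cases "r \<in> Y0 m")
    case rY1: False
    then have rn: "r \<in> Y1 m n" using Y01[OF r] by simp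
    show ?thesis
    proof (cases "s \<in> Y0 m")
      case False
      then have sn: "s \<in> Y1 m n" using Y01[OF s] by simp
      have sq: "sum \<alpha> (Y0 m) = q" using sa rn sn by simp
      have z: "\<And>k. k \<in> Y0 m \<Longrightarrow> p dvd \<alpha> k"
      proof -
        fix k assume k: "k \<in> Y0 m"
        then have "k \<noteq> r" "k \<noteq> s" using rY1 False by auto
        then show "p dvd \<alpha> k" using w0 k dv by auto
      qed
      show ?thesis
      proof (cases "\<exists>l\<in>Y0 m. 2 \<le> \<alpha> l \<and> \<alpha> l \<le> q - 1")
        case True
        then obtain l where l: "l \<in> Y0 m" "2 \<le> \<alpha> l" "\<alpha> l \<le> q - 1" by blast
        then have "l \<noteq> r" using rY1 by auto
        then show ?thesis using R1[where 'a='a, of l r \<alpha> q] l by blast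
      next
        case nb: False
        obtain l where l: "l \<in> Y0 m" "\<alpha> l > 0"
          using sq q ex_pos[of "Y0 m"] by auto
        have "\<alpha> l \<ge> p" using big[OF z[OF l(1)] l(2)] .
        then have "\<alpha> l = q" using nb l le1[OF l(1)] sq p5 by fastforce
        moreover have "l \<noteq> r" using l rY1 by auto
        ultimately show ?thesis using R4[OF p(1) ch q0' np q0] l by blast
      qed
    next
      case sY0: True
      have sq: "sum \<alpha> (Y0 m) + 1 = q" using sa rn sY0 Y01[OF s] by simp
      have "r \<noteq> s" using sY0 rY1 by auto
      then have "of_nat (\<alpha> s + 1) = (0::'a)" using bspec[OF w0 sY0] by (simp add: add.commute)
      then have "p dvd (\<alpha> s + 1)" by (simp only: dv)
        then have "\<alpha> s + 1 \<ge> p" using big by simp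
      moreover have "\<alpha> s \<le> q - 1" using le1[OF sY0] sq by simp
      moreover have "s \<noteq> r" using sY0 rY1 by auto
      ultimately show ?thesis using R1[where 'a='a, of s r \<alpha> q] sY0 p5 by auto
    qed
  next
    case rY0: True
    then have rn: "r \<notin> Y1 m n" using Y01[OF r] by simp
    show ?thesis
    proof (cases "s = r")
      case True
      have sq: "sum \<alpha> (Y0 m) = q" using sa rn True by simp
      have z: "\<And>k. k \<in> Y0 m \<Longrightarrow> p dvd \<alpha> k"
      proof -
        fix k assume k: "k \<in> Y0 m"
        show "p dvd \<alpha> k" using w0 k dv True by (cases "k = r") auto
      qed
      show ?thesis
      proof (cases "\<exists>l\<in>Y0 m. l \<noteq> r \<and> 2 \<le> \<alpha> l \<and> \<alpha> l \<le> q - 1")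
        case True
        then obtain l where l: "l \<in> Y0 m" "l \<noteq> r" "2 \<le> \<alpha> l" "\<alpha> l \<le> q - 1" by blast
        then show ?thesis using R1[where 'a='a, of l r \<alpha> q] by blast
      next
        case nb: False
        show ?thesis
        proof (cases "2 \<le> \<alpha> r \<and> \<alpha> r \<le> q - 1")
          case True
          then show ?thesis using R3[where 'a='a, of \<alpha> r q] z[OF rY0] dv rY0 by blast
        next
          case nb2: False
          obtain l where l: "l \<in> Y0 m" "\<alpha> l > 0"
            using sq q ex_pos[of "Y0 m"] by auto
          have "\<alpha> l \<ge> p" using big[OF z[OF l(1)] l(2)] .
          then have "\<alpha> l = q" using nb nb2 l le1[OF l(1)] sq p5 by (cases "l = r") fastforce+
          then show ?thesis
          proof (cases "l = r")
            case True
            then show ?thesis using R5[OF p(1) ch q0' np q0] \<open>\<alpha> l = q\<close> rY0 by blast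
          next
            case False
            then show ?thesis using R4[OF p(1) ch q0' np q0] \<open>\<alpha> l = q\<close> l by blast
          qed
        qed
      qed
    next
      case sr: False
      show ?thesis
      proof (cases "s \<in> Y0 m")
        case sY0: True
        have sq: "sum \<alpha> (Y0 m) = q" using sa rn sY0 Y01[OF s] by simp
        have "of_nat (\<alpha> s + 1) = (0::'a)" using bspec[OF w0 sY0] sr by (simp add: add.commute)
        then have "p dvd (\<alpha> s + 1)" by (simp only: dv)
        then have "\<alpha> s + 1 \<ge> p" using big by simp
        moreover have "of_nat (\<alpha> r) = (1::'a)" using bspec[OF w0 rY0] sr by simp
        then have "\<alpha> r \<ge> 1" by (cases "\<alpha> r") auto
        moreover have "\<alpha> s + \<alpha> r \<le> q" using le2[OF sY0 rY0 sr] sq by simp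
        ultimately have h: "2 \<le> \<alpha> s" "\<alpha> s \<le> q - 1" using p5 by auto
        then show ?thesis using R1[where 'a='a, of s r \<alpha> q] sY0 sr by blast
      next
        case sY1: False
        then have sn: "s \<in> Y1 m n" using Y01[OF s] by simp
        have sq: "sum \<alpha> (Y0 m) = q + 1" using sa rn sn by simp
        have ar: "of_nat (\<alpha> r) = (1::'a)" using bspec[OF w0 rY0] sr by simp
        then have ar1: "\<alpha> r \<ge> 1" by (cases "\<alpha> r") auto
        have z: "\<And>k. k \<in> Y0 m \<Longrightarrow> k \<noteq> r \<Longrightarrow> p dvd \<alpha> k"
        proof -
          fix k assume k: "k \<in> Y0 m" "k \<noteq> r"
          then have "k \<noteq> s" using sY1 by auto
          then show "p dvd \<alpha> k" using w0 k dv by auto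
        qed
        show ?thesis
        proof (cases "\<alpha> r \<ge> 2")
          case True
          have "q \<ge> 3" using q3 p5 by simp
          then show ?thesis using R2[where 'a='a and q=q and r=r and \<alpha>=\<alpha>, OF p ch _ True ar] rY0 by blast
        next
          case False
          then have ar1': "\<alpha> r = 1" using ar1 by simp
          show ?thesis
          proof (cases "\<exists>l\<in>Y0 m. l \<noteq> r \<and> 2 \<le> \<alpha> l \<and> \<alpha> l \<le> q - 1")
            case True
            then obtain l where l: "l \<in> Y0 m" "l \<noteq> r" "2 \<le> \<alpha> l" "\<alpha> l \<le> q - 1" by blast
            then show ?thesis using R1[where 'a='a, of l r \<alpha> q] by blast
          next
            case nb: False
            have "sum \<alpha> (Y0 m) = \<alpha> r + sum \<alpha> (Y0 m - {r})" using fin rY0 by (simp add: sum.remove)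
            then have "sum \<alpha> (Y0 m - {r}) = q" using sq ar1' by simp
            then obtain l where l: "l \<in> Y0 m - {r}" "\<alpha> l > 0"
              using q ex_pos[of "Y0 m - {r}"] by auto
            have lr: "l \<in> Y0 m" "l \<noteq> r" using l by auto
            have "\<alpha> l \<ge> p" using big[OF z[OF lr] l(2)] .
            moreover have "\<alpha> l + \<alpha> r \<le> q + 1" using le2[OF lr(1) rY0 lr(2)] sq by simp
            ultimately have "\<alpha> l = q" using nb lr ar1' p5 by fastforce
            then show ?thesis using R4[OF p(1) ch q0' np q0] lr by blast
          qed
        qed
      qed
    qed
  qed
qed

locale derW =
  fixes p m n q :: nat and t :: "nat \<Rightarrow> nat" and D :: "('a::field) wel \<Rightarrow> 'a wel"
  assumes prime: "prime p" and p3: "p > 3" and ch: "CHAR('a) = p"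
    and tpos: "\<forall>i\<in>{1..m}. t i > 0"
    and q1: "q > 1" and np: "\<not> (\<exists>k. q = p ^ k)"
    and DD: "D \<in> Der_deg p m n t (- int q)"
begin

lemma isder: "is_derivation p m n t D" using DD unfolding Der_deg_def by auto

lemma Dadd: "X \<in> Wev p m n t \<Longrightarrow> Z \<in> Wev p m n t \<Longrightarrow> D (\<lambda>r a. X r a + Z r a) = (\<lambda>r a. D X r a + D Z r a)"
  using isder unfolding is_derivation_def by blast

lemma Dsc: "X \<in> Wev p m n t \<Longrightarrow> D (\<lambda>r a. c * X r a) = (\<lambda>r a. c * D X r a)"
  using isder unfolding is_derivation_def by blast

lemma Dbr: "X \<in> Wev p m n t \<Longrightarrow> Z \<in> Wev p m n t \<Longrightarrow>
    D (brW p m n t X Z) = (\<lambda>r a. brW p m n t (D X) Z r a + brW p m n t X (D Z) r a)"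
  using isder unfolding is_derivation_def by blast

lemma Ddeg: "X \<in> Wdeg p m n t i \<Longrightarrow> D X \<in> Wdeg p m n t (i - int q)"
  using DD unfolding Der_deg_def by auto

lemma Dwev: "X \<in> Wev p m n t \<Longrightarrow> D X \<in> Wev p m n t"
  using isder unfolding is_derivation_def by blast

lemma zero_Wev: "(\<lambda>r a. 0) \<in> Wev p m n t"
  unfolding Wev_def by auto

lemma D0: "D (\<lambda>r a. 0) = (\<lambda>r a. 0)"
  using Dsc[OF zero_Wev, of 0] by simp

lemma Dlow: "X \<in> Wdeg p m n t e \<Longrightarrow> e - int q < -1 \<Longrightarrow> D X = (\<lambda>r a. 0)"
  using Ddeg Wdeg_low by blast

lemma Dcomm:
  assumes E: "E \<in> Wdeg p m n t e" and e: "e - int q < -1" and Yv: "Yv \<in> Wev p m n t"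
  shows "D (brW p m n t E Yv) = brW p m n t E (D Yv)"
proof -
  have "D (brW p m n t E Yv) = (\<lambda>r a. brW p m n t (D E) Yv r a + brW p m n t E (D Yv) r a)"
    using Dbr[OF Wdeg_Wev[OF E] Yv] .
  also have "D E = (\<lambda>r a. 0)" using Dlow[OF E e] .
  finally show ?thesis by (simp add: brW_zero_left)
qed

lemma p2: "p \<ge> 2" using prime by (simp add: prime_ge_2_nat)

lemma ee_basis:
  assumes k: "k \<in> Y0 m"
  shows "(ee k 1, {}) \<in> basisA p m n t"
proof -
  have "t k > 0" using tpos k by (auto simp: Y0_def)
  then have "p ^ 1 \<le> p ^ t k" using p2 by (intro power_increasing) auto
  then have "p ^ t k \<ge> 2" using p2 by simp
  then show ?thesis using k unfolding basisA_def ee_def by auto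
qed

lemma del_Wdeg: "i \<in> Y0 m \<Longrightarrow> (Mw i ((\<lambda>_. 0), {}) :: 'a wel) \<in> Wdeg p m n t (-1)"
  using Mw_Wdeg[of i m n "((\<lambda>_. 0), {})" p t] zero_basisA by (simp add: Y0_Y tau_Y0)


lemma del_step:
  assumes IH: "\<And>\<alpha>' u' r'. sum \<alpha>' (Y0 m) + card u' < sum \<alpha> (Y0 m) + card u \<Longrightarrow> r' \<in> Y m n \<Longrightarrow>
        (\<alpha>', u') \<in> basisA p m n t \<Longrightarrow> even (card u' + tau m r') \<Longrightarrow> D (Mw r' (\<alpha>', u')) = (\<lambda>r a. 0)"
    and r: "r \<in> Y m n" and a: "(\<alpha>, u) \<in> basisA p m n t" and ev: "even (card u + tau m r)"
    and i: "i \<in> Y0 m"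
  shows "derA p m n t i (D (Mw r (\<alpha>, u)) s) = (\<lambda>_. 0)"
proof -
  let ?M = "Mw r (\<alpha>, u) :: 'a wel"
  have M: "?M \<in> Wev p m n t" using Mw_Wev[OF r a] ev by simp
  have q1': "-1 - int q < -1" using q1 by simp
  have "D (brW p m n t (Mw i ((\<lambda>_. 0), {})) ?M) = brW p m n t (Mw i ((\<lambda>_. 0), {})) (D ?M)"
    by (rule Dcomm[OF del_Wdeg[OF i] q1' M])
  also have "\<dots> = (\<lambda>s. derA p m n t i (D ?M s))" by (rule brW_del[OF i Dwev[OF M]])
  finally have eq: "D (brW p m n t (Mw i ((\<lambda>_. 0), {})) ?M) = (\<lambda>s. derA p m n t i (D ?M s))" .
  have bM: "brW p m n t (Mw i ((\<lambda>_. 0), {})) ?M = (\<lambda>s. derA p m n t i (?M s))" by (rule brW_del[OF i M])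
  have "D (brW p m n t (Mw i ((\<lambda>_. 0), {})) ?M) = (\<lambda>r a. 0)"
  proof (cases "\<alpha> i \<ge> 1")
    case True
    have dm: "derA p m n t i (mon (\<alpha>, u)) = (mon (\<alpha>(i := \<alpha> i - 1), u) :: mono \<Rightarrow> 'a)"
      using True derA_mon_Y0[OF i a] by simp
    have "(\<lambda>s. derA p m n t i (?M s)) = Mw r (\<alpha>(i := \<alpha> i - 1), u)"
      by (auto intro!: ext simp: Mw_def derA_zero dm)
    moreover have "D (Mw r (\<alpha>(i := \<alpha> i - 1), u)) = (\<lambda>r a. 0)"
    proof (rule IH[OF _ r])
      have "sum (\<alpha>(i := \<alpha> i - 1)) (Y0 m) + \<alpha> i = sum \<alpha> (Y0 m) + (\<alpha> i - 1)"
        by (rule sum_upd_nat[OF finite_Y0 i])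
      then show "sum (\<alpha>(i := \<alpha> i - 1)) (Y0 m) + card u < sum \<alpha> (Y0 m) + card u" using True by simp
      show "(\<alpha>(i := \<alpha> i - 1), u) \<in> basisA p m n t" by (rule basisA_sub[OF a]) auto
      show "even (card u + tau m r)" by (rule ev)
    qed
    ultimately show ?thesis using bM by simp
  next
    case False
    have dm: "derA p m n t i (mon (\<alpha>, u)) = (\<lambda>_. 0 :: 'a)"
      using False derA_mon_Y0[OF i a] by simp
    have "(\<lambda>s. derA p m n t i (?M s)) = (\<lambda>r a. 0)"
      by (auto intro!: ext simp: Mw_def derA_zero dm)
    then show ?thesis using bM D0 by simp
  qed
  then show ?thesis using eq by (metis fun_eq_iff)
qed


definition wtv :: "nat \<Rightarrow> nat \<Rightarrow> mono \<Rightarrow> 'a" where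
  "wtv k s a = (if k \<in> Y0 m then of_nat (fst a k) else (if k \<in> snd a then 1 else 0)) - (if s = k then 1 else 0)"

definition hk :: "nat \<Rightarrow> 'a wel" where
  "hk k = (if k \<in> Y0 m then Mw k (ee k 1, {}) else Mw k ((\<lambda>_. 0), {k}))"

lemma hk_Wdeg: "k \<in> Y m n \<Longrightarrow> hk k \<in> Wdeg p m n t 0"
proof (cases "k \<in> Y0 m")
  case True
  have s1: "(\<Sum>j\<in>Y0 m. int (ee k (Suc 0) j)) = 1"
    by (subst sum_single[OF finite_Y0 True]) (auto simp: ee_def)
  show ?thesis using Mw_Wdeg[OF Y0_Y[OF True] ee_basis[OF True], where 'a='a] True
    by (simp add: hk_def s1 tau_Y0)
next
  case False
  assume k: "k \<in> Y m n"
  then have k1: "k \<in> Y1 m n" using False by (simp add: Y_def)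
  have b: "((\<lambda>_. 0), {k}) \<in> basisA p m n t" using k1 unfolding basisA_def by auto
  show ?thesis using Mw_Wdeg[OF k b, where 'a='a] False k1 by (simp add: hk_def tau_Y1)
qed

lemma brW_hk:
  assumes k: "k \<in> Y m n" and Z: "Z \<in> Wev p m n t"
  shows "brW p m n t (hk k) Z s a = wtv k s a * Z s a"
proof (cases a)
  case (Pair \<gamma> w)
  show ?thesis
  proof (cases "k \<in> Y0 m")
    case True
    then show ?thesis unfolding Pair hk_def wtv_def using brW_tor0[OF True ee_basis[OF True] Z] by simp
  next
    case False
    then have k1: "k \<in> Y1 m n" using k by (simp add: Y_def)
    then show ?thesis unfolding Pair hk_def wtv_def using brW_tor1[OF k1 Z] False by simp
  qed
qed

lemma wt_step:
  assumes r: "r \<in> Y m n" and a: "(\<alpha>, u) \<in> basisA p m n t" and ev: "even (card u + tau m r)"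
    and k: "k \<in> Y m n" and nz: "D (Mw r (\<alpha>, u)) s b \<noteq> 0"
  shows "wtv k r (\<alpha>, u) = wtv k s b"
proof -
  let ?M = "Mw r (\<alpha>, u) :: 'a wel"
  let ?c = "wtv k r (\<alpha>, u)"
  have M: "?M \<in> Wev p m n t" using Mw_Wev[OF r a] ev by simp
  have q1': "0 - int q < -1" using q1 by simp
  have bM: "brW p m n t (hk k) ?M = (\<lambda>s a. ?c * ?M s a)"
  proof (intro ext)
    fix s a
    have "brW p m n t (hk k) ?M s a = wtv k s a * ?M s a" by (rule brW_hk[OF k M])
    also have "\<dots> = ?c * ?M s a" by (auto simp: Mw_def mon_def)
    finally show "brW p m n t (hk k) ?M s a = ?c * ?M s a" .
  qed
  have "D (brW p m n t (hk k) ?M) = brW p m n t (hk k) (D ?M)"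
    by (rule Dcomm[OF hk_Wdeg[OF k] q1' M])
  then have "(\<lambda>s a. ?c * D ?M s a) = brW p m n t (hk k) (D ?M)"
    using bM Dsc[OF M, of ?c] by simp
  then have "?c * D ?M s b = wtv k s b * D ?M s b"
    using brW_hk[OF k Dwev[OF M], of s b] by (metis fun_eq_iff)
  then show ?thesis using nz by simp
qed


lemma tool_step:
  assumes IH: "\<And>\<alpha>' u' r'. sum \<alpha>' (Y0 m) + card u' < sum \<alpha> (Y0 m) + card u \<Longrightarrow> r' \<in> Y m n \<Longrightarrow>
        (\<alpha>', u') \<in> basisA p m n t \<Longrightarrow> even (card u' + tau m r') \<Longrightarrow> D (Mw r' (\<alpha>', u')) = (\<lambda>r a. 0)"
    and r: "r \<in> Y m n" and a: "(\<alpha>, u) \<in> basisA p m n t" and ev: "even (card u + tau m r)"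
    and l: "l \<in> Y0 m" and b2: "2 \<le> b" and bq: "b \<le> q - 1" and bl: "b \<le> \<alpha> l"
    and c: "(cc r \<alpha> l b :: 'a) \<noteq> 0"
  shows "D (Mw r (\<alpha>, u)) = (\<lambda>r a. 0)"
proof -
  let ?M = "Mw r (\<alpha>, u) :: 'a wel"
  let ?E = "Mw l (ee l b, {}) :: 'a wel"
  let ?Y = "Mw r (\<alpha>(l := \<alpha> l - (b - 1)), u) :: 'a wel"
  have M: "?M \<in> Wev p m n t" using Mw_Wev[OF r a] ev by simp
  have eb: "(ee l b, {}) \<in> basisA p m n t" by (rule basisA_sub[OF a]) (auto simp: ee_def bl)
  have sb: "(\<Sum>j\<in>Y0 m. ee l b j) = b"
    by (subst sum_single[OF finite_Y0 l]) (auto simp: ee_def)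
  have E: "?E \<in> Wdeg p m n t (int b - 1)"
    using Mw_Wdeg[OF Y0_Y[OF l] eb, where 'a='a] by (simp add: sb tau_Y0[OF l])
  have yb: "(\<alpha>(l := \<alpha> l - (b - 1)), u) \<in> basisA p m n t" by (rule basisA_sub[OF a]) auto
  have Yw: "?Y \<in> Wev p m n t" using Mw_Wev[OF r yb] ev by simp
  have DY: "D ?Y = (\<lambda>r a. 0)"
  proof (rule IH[OF _ r yb ev])
    have "sum (\<alpha>(l := \<alpha> l - (b - 1))) (Y0 m) + \<alpha> l = sum \<alpha> (Y0 m) + (\<alpha> l - (b - 1))"
      by (rule sum_upd_nat[OF finite_Y0 l])
    then show "sum (\<alpha>(l := \<alpha> l - (b - 1))) (Y0 m) + card u < sum \<alpha> (Y0 m) + card u"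
      using b2 bl by simp
  qed
  have e: "(int b - 1) - int q < -1" using bq q1 by simp
  have "D (brW p m n t ?E ?Y) = brW p m n t ?E (D ?Y)" by (rule Dcomm[OF E e Yw])
  also have "\<dots> = (\<lambda>r a. 0)" unfolding DY by (rule brW_zero_right)
  finally have z: "D (brW p m n t ?E ?Y) = (\<lambda>r a. 0)" .
  have b1: "1 \<le> b" using b2 by simp
  have "brW p m n t ?E ?Y = (\<lambda>s x. cc r \<alpha> l b * ?M s x)"
    using brW_tool[OF l a b1 bl r] by (simp add: cc_def)
  then have "D (brW p m n t ?E ?Y) = (\<lambda>s x. cc r \<alpha> l b * D ?M s x)" using Dsc[OF M] by simp
  then have "\<And>s x. cc r \<alpha> l b * D ?M s x = 0" using z by (metis fun_eq_iff)
  then show ?thesis using c by (auto intro!: ext)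
qed


lemma small_inj:
  assumes "x \<le> 2" "y \<le> 2" "(of_nat x :: 'a) = of_nat y"
  shows "x = y"
proof -
  have two: "(2::'a) \<noteq> 0"
  proof
    assume "(2::'a) = 0"
    then have "of_nat 2 = (0::'a)" by simp
    then have "p dvd 2" using ch by (simp only: of_nat_eq_0_iff_char_dvd)
    then have "p \<le> 2" by (rule dvd_imp_le) simp
    then show False using p3 by simp
  qed
  have ot: "(1::'a) \<noteq> 2"
  proof
    assume h: "(1::'a) = 2"
    have "(1::'a) + 0 = 1 + 1" unfolding one_add_one h[symmetric] by simp
    then show False by (metis add_left_cancel one_neq_zero)
  qed
  have "x \<in> {0, 1, 2}" "y \<in> {0, 1, 2}" using assms by auto
  then show ?thesis using assms(3) two ot by auto
qed

lemma Dmon_aux: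
  "\<forall>\<alpha> u r. sum \<alpha> (Y0 m) + card u = N \<longrightarrow> r \<in> Y m n \<longrightarrow> (\<alpha>, u) \<in> basisA p m n t \<longrightarrow>
      even (card u + tau m r) \<longrightarrow> D (Mw r (\<alpha>, u)) = (\<lambda>r a. 0)"
proof (induction N rule: less_induct)
  case (less N)
  show ?case
  proof (intro allI impI)
    fix \<alpha> u r
    assume N: "sum \<alpha> (Y0 m) + card u = N" and r: "r \<in> Y m n" and a: "(\<alpha>, u) \<in> basisA p m n t"
      and ev: "even (card u + tau m r)"
    have IH: "\<And>\<alpha>' u' r'. sum \<alpha>' (Y0 m) + card u' < sum \<alpha> (Y0 m) + card u \<Longrightarrow> r' \<in> Y m n \<Longrightarrow>
        (\<alpha>', u') \<in> basisA p m n t \<Longrightarrow> even (card u' + tau m r') \<Longrightarrow> D (Mw r' (\<alpha>', u')) = (\<lambda>r a. 0)"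
      using less.IH N by blast
    let ?M = "Mw r (\<alpha>, u) :: 'a wel"
    have iN: "(\<Sum>x\<in>Y0 m. int (\<alpha> x)) + int (card u) - 1 = int N - 1" using N by (metis of_nat_add of_nat_sum)
    have Mdeg: "?M \<in> Wdeg p m n t (int N - 1)" using Mw_Wdeg[OF r a, where 'a='a] ev by (simp add: iN)
    have M: "?M \<in> Wev p m n t" using Mw_Wev[OF r a] ev by simp
    have Zdeg: "D ?M \<in> Wdeg p m n t (int N - 1 - int q)" using Ddeg[OF Mdeg] .
    show "D ?M = (\<lambda>r a. 0)"
    proof (cases "N < q")
      case True
      then show ?thesis using Dlow[OF Mdeg] by simp
    next
      case Nq: False
      show ?thesis
      proof (rule ccontr)
        assume "D ?M \<noteq> (\<lambda>r a. 0)"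
        then obtain s b where nz: "D ?M s b \<noteq> 0" by (meson ext)
        obtain \<gamma> w where b: "b = (\<gamma>, w)" by (cases b)
        have sY: "s \<in> Y m n" and gb: "(\<gamma>, w) \<in> basisA p m n t"
          and dg: "int (\<Sum>j\<in>Y0 m. \<gamma> j) + int (card w) - 1 = int N - 1 - int q"
          using Zdeg nz unfolding Wdeg_def Wev_def b by auto
        have g0: "\<And>i. i \<in> Y0 m \<Longrightarrow> \<gamma> i = 0"
        proof (rule ccontr)
          fix i assume i: "i \<in> Y0 m" and ne: "\<gamma> i \<noteq> 0"
          have gb': "(\<gamma>(i := \<gamma> i - 1), w) \<in> basisA p m n t" by (rule basisA_sub[OF gb]) auto
          have eqg: "(\<gamma>(i := \<gamma> i - 1))(i := (\<gamma>(i := \<gamma> i - 1)) i + 1) = \<gamma>" using ne by (auto simp: fun_eq_iff)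
          have "derA p m n t i (D ?M s) (\<gamma>(i := \<gamma> i - 1), w) = D ?M s (\<gamma>, w)"
            using gb' i unfolding derA_def by (simp only: case_prod_conv if_True eqg simp_thms)
          moreover have "derA p m n t i (D ?M s) = (\<lambda>_. 0)" by (rule del_step[OF IH r a ev i])
          ultimately show False using nz b by simp
        qed
        have "(\<Sum>j\<in>Y0 m. \<gamma> j) = 0" using g0 by simp
        then have Nw: "card w + q = N" using dg by simp
        have w0: "\<forall>k\<in>Y0 m. (of_nat (\<alpha> k) :: 'a) + (if s = k then 1 else 0) = (if r = k then 1 else 0)"
        proof
          fix k assume k: "k \<in> Y0 m"
          have "wtv k r (\<alpha>, u) = wtv k s (\<gamma>, w)" using wt_step[OF r a ev Y0_Y[OF k]] nz b by simp
          then show "(of_nat (\<alpha> k) :: 'a) + (if s = k then 1 else 0) = (if r = k then 1 else 0)"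
            using g0[OF k] k unfolding wtv_def by (auto simp: algebra_simps split: if_splits)
        qed
        have w1: "\<And>k. k \<in> Y1 m n \<Longrightarrow> (if k \<in> u then 1 else 0) + (if s = k then 1 else 0) = (if k \<in> w then 1 else 0) + (if r = k then (1::nat) else 0)"
        proof -
          fix k assume k: "k \<in> Y1 m n"
          have "wtv k r (\<alpha>, u) = wtv k s (\<gamma>, w)" using wt_step[OF r a ev Y1_Y[OF k]] nz b by simp
          then have "(of_nat ((if k \<in> u then 1 else 0) + (if s = k then 1 else 0)) :: 'a) = of_nat ((if k \<in> w then 1 else 0) + (if r = k then (1::nat) else 0))"
            using Y1_notY0[OF k] unfolding wtv_def by (auto simp: algebra_simps split: if_splits)
          then show "(if k \<in> u then 1 else 0) + (if s = k then 1 else 0) = (if k \<in> w then 1 else 0) + (if r = k then (1::nat) else 0)"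
            by (rule small_inj[rotated 2]) auto
        qed
        have uY: "u \<subseteq> Y1 m n" "w \<subseteq> Y1 m n" using a gb unfolding basisA_def by auto
        have finY1: "finite (Y1 m n)" by (simp add: Y1_def)
        have cs: "\<And>v. v \<subseteq> Y1 m n \<Longrightarrow> (\<Sum>k\<in>Y1 m n. (if k \<in> v then 1 else 0)) = (card v :: nat)"
        proof -
          fix v assume v: "v \<subseteq> Y1 m n"
          have "(\<Sum>k\<in>Y1 m n. (if k \<in> v then 1 else 0)) = (\<Sum>k\<in>Y1 m n \<inter> v. (1::nat))"
            using finY1 by (simp add: sum.If_cases Int_def)
          also have "Y1 m n \<inter> v = v" using v by auto
          finally show "(\<Sum>k\<in>Y1 m n. (if k \<in> v then 1 else 0)) = (card v :: nat)" by simp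
        qed
        have "(\<Sum>k\<in>Y1 m n. (if k \<in> u then 1 else 0) + (if s = k then 1 else 0)) = (\<Sum>k\<in>Y1 m n. (if k \<in> w then 1 else 0) + (if r = k then (1::nat) else 0))"
          using w1 by (intro sum.cong) auto
        then have cu: "card u + (if s \<in> Y1 m n then 1 else 0) = card w + (if r \<in> Y1 m n then 1 else 0)"
          using finY1 by (simp add: sum.distrib cs[OF uY(1)] cs[OF uY(2)] sum.delta eq_commute[of s] eq_commute[of r])
        have sa: "sum \<alpha> (Y0 m) + (if r \<in> Y1 m n then 1 else 0) = q + (if s \<in> Y1 m n then 1 else 0)"
          using cu Nw N by simp
        obtain l where l: "l \<in> Y0 m" and "\<exists>b. goodb q r \<alpha> l b TYPE('a)"
          using exists_good[OF prime p3 ch q1 np r sY sa w0] by blast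
        then obtain bb where g: "goodb q r \<alpha> l bb TYPE('a)" by blast
        have "D ?M = (\<lambda>r a. 0)"
          using g unfolding goodb_def by (intro tool_step[OF IH r a ev l]) auto
        then show False using nz by simp
      qed
    qed
  qed
qed


lemma Dmon:
  assumes "r \<in> Y m n" "a \<in> basisA p m n t" "even (card (snd a) + tau m r)"
  shows "D (Mw r a) = (\<lambda>r a. 0)"
  using Dmon_aux assms by (cases a) auto

lemma D_supp:
  assumes F: "finite F"
  shows "\<forall>X\<in>Wev p m n t. {(r, a). X r a \<noteq> 0} \<subseteq> F \<longrightarrow> D X = (\<lambda>r a. 0)"
  using F
proof (induction F rule: finite_induct)
  case empty
  show ?case
  proof (intro ballI impI)
    fix X :: "'a wel" assume "X \<in> Wev p m n t" "{(r, a). X r a \<noteq> 0} \<subseteq> {}"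
    then have "X = (\<lambda>r a. 0)" by (auto intro!: ext)
    then show "D X = (\<lambda>r a. 0)" using D0 by simp
  qed
next
  case (insert x F)
  show ?case
  proof (intro ballI impI)
    fix X :: "'a wel" assume X: "X \<in> Wev p m n t" and sup: "{(r, a). X r a \<noteq> 0} \<subseteq> insert x F"
    obtain r0 a0 where x: "x = (r0, a0)" by (cases x)
    let ?X' = "\<lambda>r a. if (r, a) = (r0, a0) then 0 else X r a"
    let ?c = "X r0 a0"
    have X': "?X' \<in> Wev p m n t" using X unfolding Wev_def by auto
    have sup': "{(r, a). ?X' r a \<noteq> 0} \<subseteq> F" using sup x by auto
    have DX': "D ?X' = (\<lambda>r a. 0)" using insert.IH[rule_format, OF X' sup'] .
    show "D X = (\<lambda>r a. 0)"
    proof (cases "?c = 0")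
      case True
      then have "X = ?X'" by (auto intro!: ext)
      then show ?thesis using DX' by simp
    next
      case False
      then have r0: "r0 \<in> Y m n" and a0: "a0 \<in> basisA p m n t" and ev: "even (card (snd a0) + tau m r0)"
        using X False unfolding Wev_def mem_Collect_eq by blast+
      have Mw: "Mw r0 a0 \<in> Wev p m n t" by (rule Mw_Wev[OF r0 a0 ev])
      have cM: "(\<lambda>r a. ?c * Mw r0 a0 r a) \<in> Wev p m n t" using Mw unfolding Wev_def by auto
      have "X = (\<lambda>r a. ?X' r a + (\<lambda>r a. ?c * Mw r0 a0 r a) r a)"
        by (auto intro!: ext simp: Mw_def mon_def)
      then have "D X = (\<lambda>r a. D ?X' r a + D (\<lambda>r a. ?c * Mw r0 a0 r a) r a)"
        using Dadd[OF X' cM] by simp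
      also have "D (\<lambda>r a. ?c * Mw r0 a0 r a) = (\<lambda>r a. ?c * D (Mw r0 a0) r a)" by (rule Dsc[OF Mw])
      finally show ?thesis using DX' Dmon[OF r0 a0 ev] by simp
    qed
  qed
qed

lemma D_all:
  assumes X: "X \<in> Wev p m n t"
  shows "D X = (\<lambda>r a. 0)"
proof -
  have "{(r, a). X r a \<noteq> 0} \<subseteq> Y m n \<times> basisA p m n t" using X unfolding Wev_def by auto
  moreover have "finite (Y m n \<times> basisA p m n t)" by (simp add: finite_Y finite_basisA)
  ultimately show ?thesis using D_supp[of "Y m n \<times> basisA p m n t"] X by auto
qed

end


theorem proposition3p2p9:
  fixes p m n q :: nat and t :: "nat \<Rightarrow> nat"
    and D :: "('a::field) wel \<Rightarrow> 'a wel"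
  assumes "prime p" and "p > 3" and "CHAR('a) = p"
    and "m \<ge> 3" and "n \<ge> 3"
    and "\<forall>i\<in>{1..m}. t i > 0"
    and "q > 1" and "\<not> (\<exists>k. q = p ^ k)"
    and "D \<in> Der_deg p m n t (- int q)"
  shows "\<forall>X\<in>Wev p m n t. D X = (\<lambda>r a. 0)"
proof -
  interpret derW p m n q t D
    by unfold_locales (use assms in auto)
  show ?thesis using D_all by blast
qed

end
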